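(* There is an absolute constant $C>0$ such that the following holds. Let $n\ge Ct^2$, let $F=\{I_1,\ldots,I_k\}$ be a $[t,k]$-interval system with $I_1,\ldots,I_k$ ordered left to right, and let $\mathfrak{s}=\mathrm{Sizes}(F)=(|I_1|,\ldots,|I_k|)$. Let $\mathcal{ALG}$ be an $\ell$-pass streaming algorithm with $s$ bits of memory which distinguishes between $\mathrm{Planted}[F]$ and $\mathrm{Uniform}$ with error at most $0.5\%$. Then there is a (randomized) $k$-party communication protocol $\Pi$ in which each player writes at most $\ell s$ bits, which solves unique set-disjointness under input distribution $\mathcal{D}_{\mathfrak{s}}$ with error at most $1\%$.
   Context: Streams are elements of $[n]^t$; $\mathrm{Uniform}$ is the uniform distribution on $[n]^t$. An interval is a nonempty set $\{a,\ldots,b\}$; a $[t,k]$-interval system is a set of $k$ pairwise disjoint intervals in $[t]$. $\mathrm{Planted}[F]$: sample a uniform needle $x\in[n]$; in each interval $I\in F$ choose a uniform index $a_I\in I$ and set $X_{a_I}=x$; all other coordinates are i.i.d. uniform in $[n]$. An $\ell$-pass streaming algorithm with $s$ bits of memory reads the stream in order $\ell$ times keeping only an $s$-bit state, and outputs a bit; it distinguishes $D_0,D_1$ with error $\delta$ if on a stream from $D_b$, $b$ a uniform bit, it outputs $b$ with probability $\ge1-\delta$. Unique set-disjointness: inputs $X=(X_1,\ldots,X_k)$ of subsets of $[n]$ (player $i$ holds $X_i$); $\mathcal{F}_0$ = pairwise disjoint tuples, $\mathcal{F}_1$ = tuples with one common element to all sets and otherwise pairwise disjoint; $\mathcal{F}^b_{\mathfrak{s}}=\mathcal{F}_b\cap\{|X_i|=s_i\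 \forall i\}$, $\mathcal{D}^b_{\mathfrak{s}}$ uniform on $\mathcal{F}^b_{\mathfrak{s}}$, $\mathcal{D}_{\mathfrak{s}}$ samples a uniform bit $b$ then $X\sim\mathcal{D}^b_{\mathfrak{s}}$; the protocol (blackboard model) has error $\delta$ if its output differs from $b$ with probability at most $\delta$. *)

theory Defs
  imports "HOL-Probability.Probability"
begin

text \<open>Conventions: the alphabet [n] is rendered as {0..<n} and stream positions [t]
as {0..<t}. A stream is a nat list of length t with entries < n.\<close>

definition streams :: "nat \<Rightarrow> nat \<Rightarrow> nat list set" where
  "streams n t = {xs. length xs = t \<and> set xs \<subseteq> {..<n}}"

definition uniform_stream :: "nat \<Rightarrow> nat \<Rightarrow> nat list pmf" where
  "uniform_stream n t = pmf_of_set (streams n t)"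

definition is_interval_system :: "nat \<Rightarrow> nat \<Rightarrow> nat set list \<Rightarrow> bool" where
  "is_interval_system t k F \<longleftrightarrow>
     length F = k \<and>
     (\<forall>I\<in>set F. \<exists>a b. a \<le> b \<and> b < t \<and> I = {a..b}) \<and>
     (\<forall>i j. i < j \<longrightarrow> j < k \<longrightarrow> Max (F ! i) < Min (F ! j))"

definition Sizes :: "nat set list \<Rightarrow> nat list" where
  "Sizes F = map card F"

definition planted :: "nat \<Rightarrow> nat \<Rightarrow> nat set list \<Rightarrow> nat list pmf" where
  "planted n t F = do {
      x \<leftarrow> pmf_of_set {..<n};
      a \<leftarrow> Pi_pmf (set F) 0 (\<lambda>I. pmf_of_set I);
      Y \<leftarrow> uniform_stream n t;
      return_pmf (map (\<lambda>i. if (\<exists>I\<in>set F. a I = i) then x else Y ! i) [0..<t])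
   }"

text \<open>With s bits of memory the states are the numbers below 2^s.\<close>
datatype salg = SAlg (s_init: nat) (s_step: "nat \<Rightarrow> nat \<Rightarrow> nat \<Rightarrow> nat \<Rightarrow> nat") (s_out: "nat \<Rightarrow> bool")

definition valid_salg :: "nat \<Rightarrow> salg \<Rightarrow> bool" where
  "valid_salg s A \<longleftrightarrow> s_init A < 2 ^ s \<and> (\<forall>j i q a. q < 2 ^ s \<longrightarrow> s_step A j i q a < 2 ^ s)"

definition run_pass :: "salg \<Rightarrow> nat \<Rightarrow> nat list \<Rightarrow> nat \<Rightarrow> nat" where
  "run_pass A j xs q = fold (\<lambda>(i, a) q. s_step A j i q a) (zip [0..<length xs] xs) q"

definition run_salg :: "salg \<Rightarrow> nat \<Rightarrow> nat list \<Rightarrow> bool" where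
  "run_salg A l xs = s_out A (fold (\<lambda>j q. run_pass A j xs q) [0..<l] (s_init A))"

text \<open>A randomized l-pass s-bit algorithm is a distribution over deterministic ones.\<close>
definition distinguishes ::
  "nat \<Rightarrow> nat \<Rightarrow> salg pmf \<Rightarrow> nat list pmf \<Rightarrow> nat list pmf \<Rightarrow> real \<Rightarrow> bool" where
  "distinguishes l s Alg D0 D1 \<delta> \<longleftrightarrow>
     (\<forall>A\<in>set_pmf Alg. valid_salg s A) \<and>
     measure_pmf.prob (do {
        b \<leftarrow> bernoulli_pmf (1/2);
        X \<leftarrow> (if b then D1 else D0);
        A \<leftarrow> Alg;
        return_pmf (run_salg A l X = b) }) {True} \<ge> 1 - \<delta>"

text \<open>Players are 0..k-1, player i holds X ! i.\<close>
datatype protocol = Protocol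
  (p_speaker: "bool list \<Rightarrow> nat option")
  (p_msg: "nat \<Rightarrow> nat set \<Rightarrow> bool list \<Rightarrow> bool")
  (p_decide: "bool list \<Rightarrow> bool")

fun transcript :: "protocol \<Rightarrow> nat set list \<Rightarrow> nat \<Rightarrow> bool list" where
  "transcript P X 0 = []"
| "transcript P X (Suc m) =
     (let \<tau> = transcript P X m in
        case p_speaker P \<tau> of None \<Rightarrow> \<tau> | Some i \<Rightarrow> \<tau> @ [p_msg P i (X ! i) \<tau>])"

definition halts :: "protocol \<Rightarrow> nat set list \<Rightarrow> bool" where
  "halts P X \<longleftrightarrow> (\<exists>m. p_speaker P (transcript P X m) = None)"

definition final_transcript :: "protocol \<Rightarrow> nat set list \<Rightarrow> bool list" where
  "final_transcript P X = transcript P X (LEAST m. p_speaker P (transcript P X m) = None)"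

definition protocol_output :: "protocol \<Rightarrow> nat set list \<Rightarrow> bool" where
  "protocol_output P X = p_decide P (final_transcript P X)"

definition bits_by :: "protocol \<Rightarrow> nat \<Rightarrow> bool list \<Rightarrow> nat" where
  "bits_by P i \<tau> = card {j. j < length \<tau> \<and> p_speaker P (take j \<tau>) = Some i}"

definition writes_at_most :: "nat \<Rightarrow> nat \<Rightarrow> protocol \<Rightarrow> bool" where
  "writes_at_most k B P \<longleftrightarrow>
     (\<forall>\<tau> i. p_speaker P \<tau> = Some i \<longrightarrow> i < k) \<and>
     (\<forall>X. length X = k \<longrightarrow> halts P X \<and> (\<forall>m i. bits_by P i (transcript P X m) \<le> B))"

definition pw_disjoint :: "nat set list \<Rightarrow> bool" where
  "pw_disjoint X \<longleftrightarrow> (\<forall>i j. i < length X \<longrightarrow> j < length X \<longrightarrow> i \<noteq> j \<longrightarrow> X ! i \<inter> X ! j = {})"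

definition uniquely_intersecting :: "nat \<Rightarrow> nat set list \<Rightarrow> bool" where
  "uniquely_intersecting n X \<longleftrightarrow>
     (\<exists>x<n. (\<forall>i<length X. x \<in> X ! i) \<and>
            (\<forall>i j. i < length X \<longrightarrow> j < length X \<longrightarrow> i \<noteq> j \<longrightarrow> X ! i \<inter> X ! j = {x}))"

definition USD_inputs :: "nat \<Rightarrow> nat list \<Rightarrow> bool \<Rightarrow> nat set list set" where
  "USD_inputs n sz b = {X. length X = length sz \<and>
       (\<forall>i<length sz. X ! i \<subseteq> {..<n} \<and> card (X ! i) = sz ! i) \<and>
       (if b then uniquely_intersecting n X else pw_disjoint X)}"

definition usd_error :: "nat \<Rightarrow> nat list \<Rightarrow> protocol pmf \<Rightarrow> real" where
  "usd_error n sz Pr = measure_pmf.prob (do {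
        b \<leftarrow> bernoulli_pmf (1/2);
        X \<leftarrow> pmf_of_set (USD_inputs n sz b);
        P \<leftarrow> Pr;
        return_pmf (protocol_output P X \<noteq> b) }) {True}"

end

theory Submission
  imports Defs
begin



lemma pmf_of_set_fibers:
  assumes fin: "finite A" and ne: "A \<noteq> {}" and img: "f ` A = B"
    and fib: "\<And>y. y \<in> B \<Longrightarrow> card {a\<in>A. f a = y} = c"
  shows "map_pmf f (pmf_of_set A) = pmf_of_set B"
proof -
  have finB: "finite B" using fin img by auto
  have neB: "B \<noteq> {}" using ne img by auto
  have Aeq: "A = (\<Union>y\<in>B. {a\<in>A. f a = y})" using img by auto
  have "card A = (\<Sum>y\<in>B. card {a\<in>A. f a = y})"
    by (subst Aeq, rule card_UN_disjoint) (use fin finB in auto)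
  also have "\<dots> = card B * c" using fib by simp
  finally have cA: "card A = card B * c" .
  show ?thesis
  proof (rule pmf_eqI)
    fix y
    have "pmf (map_pmf f (pmf_of_set A)) y = card (A \<inter> f -` {y}) / card A"
      by (simp add: pmf_map measure_pmf_of_set fin ne)
    also have "A \<inter> f -` {y} = {a\<in>A. f a = y}" by auto
    finally have *: "pmf (map_pmf f (pmf_of_set A)) y = card {a\<in>A. f a = y} / card A" .
    show "pmf (map_pmf f (pmf_of_set A)) y = pmf (pmf_of_set B) y"
    proof (cases "y \<in> B")
      case True
      obtain a0 where a0: "a0 \<in> A" "f a0 = y" using True img by blast
      have "card {a\<in>A. f a = y} > 0"
        using a0 fin by (subst card_gt_0_iff) auto
      then have cpos: "c > 0" using fib[OF True] by simp
      have "pmf (map_pmf f (pmf_of_set A)) y = real c / (real (card B) * real c)"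
        using * fib[OF True] cA by simp
      also have "\<dots> = 1 / real (card B)" using cpos by simp
      finally show ?thesis using True neB finB by simp
    next
      case False
      then have "{a\<in>A. f a = y} = {}" using img by auto
      then have "card {a\<in>A. f a = y} = 0" by (metis card.empty)
      then show ?thesis using * False neB finB by simp
    qed
  qed
qed

lemma pmf_of_set_sub_diff:
  assumes fin: "finite A" and sub: "G \<subseteq> A" and ne: "G \<noteq> {}"
  shows "\<bar>measure_pmf.prob (pmf_of_set A) E - measure_pmf.prob (pmf_of_set G) E\<bar>
          \<le> card (A - G) / card A"
proof -
  have finG: "finite G" using fin sub finite_subset by blast
  have neA: "A \<noteq> {}" using ne sub by auto
  define a where "a = real (card A)"
  define g where "g = real (card G)"
  define e2 where "e2 = real (card (G \<inter> E))"
  define d where "d = real (card ((A - G) \<inter> E))"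
  have "A \<inter> E = (G \<inter> E) \<union> ((A - G) \<inter> E)" using sub by auto
  then have "card (A \<inter> E) = card (G \<inter> E) + card ((A - G) \<inter> E)"
    using card_Un_disjoint[of "G \<inter> E" "(A - G) \<inter> E"] fin finG by auto
  then have e1: "real (card (A \<inter> E)) = e2 + d" unfolding e2_def d_def by simp
  have cAG: "real (card (A - G)) = a - g" unfolding a_def g_def
    using card_Diff_subset[OF finG sub] card_mono[OF fin sub] by simp
  have dle: "d \<le> a - g" unfolding d_def using cAG
    by (metis Int_lower1 card_mono fin finite_Diff of_nat_le_iff)
  have d0: "0 \<le> d" unfolding d_def by simp
  have e20: "0 \<le> e2" unfolding e2_def by simp
  have e2g: "e2 \<le> g" unfolding e2_def g_def by (simp add: card_mono finG)
  have gpos: "g > 0" unfolding g_def using finG ne by (simp add: card_gt_0_iff)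
  have ga: "g \<le> a" unfolding g_def a_def by (simp add: card_mono fin sub)
  have lhs: "measure_pmf.prob (pmf_of_set A) E - measure_pmf.prob (pmf_of_set G) E
      = (e2 + d) / a - e2 / g"
    using e1 by (simp add: measure_pmf_of_set fin neA ne finG a_def g_def e2_def)
  have q: "e2 / g \<le> 1" "0 \<le> e2 / g" using e2g gpos e20 by auto
  have key: "(e2 + d) / a - e2 / g = (d - (e2 / g) * (a - g)) / a"
    using gpos ga by (simp add: field_simps)
  have uw: "(e2 / g) * (a - g) \<le> a - g" "0 \<le> (e2 / g) * (a - g)"
    using q ga mult_left_le_one_le[of "a-g" "e2/g"] mult_nonneg_nonneg[of "e2/g" "a-g"] by auto
  have b: "\<bar>d - (e2 / g) * (a - g)\<bar> \<le> a - g" using uw d0 dle by linarith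
  have apos: "a > 0" using gpos ga by linarith
  have "\<bar>(d - (e2 / g) * (a - g)) / a\<bar> \<le> (a - g) / a"
    using b apos by (simp add: abs_divide divide_right_mono)
  then show ?thesis using lhs key cAG a_def by simp
qed

lemma pair_pmf_of_set:
  assumes "finite A" "A \<noteq> {}" "finite B" "B \<noteq> {}"
  shows "pair_pmf (pmf_of_set A) (pmf_of_set B) = pmf_of_set (A \<times> B)"
proof (rule pmf_eqI)
  fix z :: "'a \<times> 'b"
  obtain x y where z: "z = (x, y)" by (cases z)
  show "pmf (pair_pmf (pmf_of_set A) (pmf_of_set B)) z = pmf (pmf_of_set (A \<times> B)) z"
    unfolding z pmf_pair using assms
    by (simp add: indicator_def card_cartesian_product)
qed

lemma prob_bind_return_True:
  "measure_pmf.prob (bind_pmf M (\<lambda>A. bind_pmf \<mu> (\<lambda>y. return_pmf (f A y)))) {True}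
   = (\<integral>A. measure_pmf.prob \<mu> {y. f A y} \<partial>M)"
proof -
  have "measure_pmf.prob (bind_pmf M (\<lambda>A. bind_pmf \<mu> (\<lambda>y. return_pmf (f A y)))) {True}
      = pmf (bind_pmf M (\<lambda>A. bind_pmf \<mu> (\<lambda>y. return_pmf (f A y)))) True"
    by (simp add: measure_pmf_single)
  also have "\<dots> = (\<integral>A. pmf (bind_pmf \<mu> (\<lambda>y. return_pmf (f A y))) True \<partial>M)"
    by (rule pmf_bind)
  also have "\<dots> = (\<integral>A. measure_pmf.prob \<mu> {y. f A y} \<partial>M)"
    by (intro Bochner_Integration.integral_cong refl)
       (simp add: bind_return_pmf' map_pmf_def[symmetric] pmf_map vimage_def)
  finally show ?thesis .
qed

lemma bind_compare:
  assumes "\<And>E. \<bar>measure_pmf.prob \<mu> E - measure_pmf.prob \<nu> E\<bar> \<le> \<epsilon>"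
  shows "\<bar>measure_pmf.prob (bind_pmf M (\<lambda>A. bind_pmf \<mu> (\<lambda>y. return_pmf (f A y)))) {True}
        - measure_pmf.prob (bind_pmf M (\<lambda>A. bind_pmf \<nu> (\<lambda>y. return_pmf (f A y)))) {True}\<bar> \<le> \<epsilon>"
proof -
  have i1: "integrable M (\<lambda>A. measure_pmf.prob \<mu> {y. f A y})"
    by (rule measure_pmf.integrable_const_bound[where B=1]) auto
  have i2: "integrable M (\<lambda>A. measure_pmf.prob \<nu> {y. f A y})"
    by (rule measure_pmf.integrable_const_bound[where B=1]) auto
  have "\<bar>(\<integral>A. measure_pmf.prob \<mu> {y. f A y} \<partial>M) - (\<integral>A. measure_pmf.prob \<nu> {y. f A y} \<partial>M)\<bar>
      = \<bar>\<integral>A. measure_pmf.prob \<mu> {y. f A y} - measure_pmf.prob \<nu> {y. f A y} \<partial>M\<bar>"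
    using i1 i2 by simp
  also have "\<dots> \<le> (\<integral>A. \<bar>measure_pmf.prob \<mu> {y. f A y} - measure_pmf.prob \<nu> {y. f A y}\<bar> \<partial>M)"
    by (rule integral_abs_bound)
  also have "\<dots> \<le> (\<integral>A. \<epsilon> \<partial>M)"
    by (intro integral_mono) (use i1 i2 assms in auto)
  also have "\<dots> = \<epsilon>" by simp
  finally show ?thesis by (simp add: prob_bind_return_True)
qed




lemma card_lists_nth:
  assumes "\<And>p. p < t \<Longrightarrow> finite (S p)"
  shows "card {xs. length xs = t \<and> (\<forall>p<t. xs ! p \<in> S p)} = (\<Prod>p<t. card (S p))"
proof -
  have "bij_betw (\<lambda>xs. restrict (\<lambda>p. xs ! p) {..<t}) {xs. length xs = t \<and> (\<forall>p<t. xs ! p \<in> S p)}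
          (PiE {..<t} S)"
  proof (rule bij_betwI[where g = "\<lambda>f. map f [0..<t]"])
    show "(\<lambda>xs. restrict ((!) xs) {..<t}) \<in> {xs. length xs = t \<and> (\<forall>p<t. xs ! p \<in> S p)} \<rightarrow> PiE {..<t} S"
      by auto
    show "(\<lambda>f. map f [0..<t]) \<in> PiE {..<t} S \<rightarrow> {xs. length xs = t \<and> (\<forall>p<t. xs ! p \<in> S p)}"
      by (auto simp: PiE_def Pi_def)
    show "map (restrict ((!) x) {..<t}) [0..<t] = x" if "x \<in> {xs. length xs = t \<and> (\<forall>p<t. xs ! p \<in> S p)}" for x
      using that by (auto intro: nth_equalityI)
    show "restrict ((!) (map y [0..<t])) {..<t} = y" if "y \<in> PiE {..<t} S" for y
      using that by (auto simp: PiE_def extensional_def restrict_def fun_eq_iff)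
  qed
  then have "card {xs. length xs = t \<and> (\<forall>p<t. xs ! p \<in> S p)} = card (PiE {..<t} S)"
    by (rule bij_betw_same_card)
  also have "\<dots> = (\<Prod>p<t. card (S p))" by (simp add: card_PiE)
  finally show ?thesis .
qed

lemma streams_nth: "streams n t = {xs. length xs = t \<and> (\<forall>p<t. xs ! p \<in> {..<n})}"
  by (auto simp: streams_def set_conv_nth)

lemma finite_streams: "finite (streams n t)"
proof -
  have "streams n t \<subseteq> {xs. set xs \<subseteq> {..<n} \<and> length xs = t}" by (auto simp: streams_def)
  then show ?thesis using finite_lists_length_eq[of "{..<n}" t] finite_subset by auto
qed

lemma streams_ne: "0 < n \<Longrightarrow> replicate t 0 \<in> streams n t"
  by (auto simp: streams_def)

lemma card_streams: "card (streams n t) = n ^ t"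
  unfolding streams_nth by (subst card_lists_nth) auto

locale isys =
  fixes n t k :: nat and F :: "nat set list"
  assumes isF: "is_interval_system t k F" and npos: "0 < n"
begin

definition mn where "mn i = Min (F ! i)"
definition mx where "mx i = Max (F ! i)"
definition sz where "sz i = card (F ! i)"

lemma lenF: "length F = k" using isF by (simp add: is_interval_system_def)

lemma Fi: assumes "i < k" shows "F ! i = {mn i..mx i}" "mn i \<le> mx i" "mx i < t"
proof -
  have "F ! i \<in> set F" using assms lenF by simp
  moreover have "\<forall>I\<in>set F. \<exists>a b. a \<le> b \<and> b < t \<and> I = {a..b}"
    using isF unfolding is_interval_system_def by blast
  ultimately obtain a b where ab: "a \<le> b" "b < t" "F ! i = {a..b}" by blast
  have "Min {a..b} = a" using ab(1) by (intro Min_eqI) auto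
  moreover have "Max {a..b} = b" using ab(1) by (intro Max_eqI) auto
  ultimately have "mn i = a" "mx i = b" using ab(3) by (auto simp: mn_def mx_def)
  then show "F ! i = {mn i..mx i}" "mn i \<le> mx i" "mx i < t" using ab by auto
qed

lemma sz_eq: "i < k \<Longrightarrow> sz i = Suc (mx i) - mn i" unfolding sz_def by (subst Fi(1)) auto

lemma sz_pos: "i < k \<Longrightarrow> 0 < sz i" using sz_eq Fi(2)[of i] by simp

lemma finF: "i < k \<Longrightarrow> finite (F ! i)" by (subst Fi(1)) auto

lemma FsubT: "i < k \<Longrightarrow> p \<in> F ! i \<Longrightarrow> p < t"
  using Fi(1)[of i] Fi(3)[of i] by auto

lemma mem_F: "i < k \<Longrightarrow> p \<in> F ! i \<longleftrightarrow> mn i \<le> p \<and> p \<le> mx i" by (subst Fi(1)) auto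

lemma sep: "i < j \<Longrightarrow> j < k \<Longrightarrow> mx i < mn j"
  using isF unfolding is_interval_system_def mn_def mx_def by blast

lemma mn_mono: "i < j \<Longrightarrow> j < k \<Longrightarrow> mn i < mn j"
  using sep[of i j] Fi(2)[of i] Fi(2)[of j] by linarith

lemma uniq: "i < k \<Longrightarrow> j < k \<Longrightarrow> p \<in> F ! i \<Longrightarrow> p \<in> F ! j \<Longrightarrow> i = j"
proof (rule ccontr)
  assume a: "i < k" "j < k" "p \<in> F ! i" "p \<in> F ! j" "i \<noteq> j"
  then have "mn i \<le> p" "p \<le> mx i" "mn j \<le> p" "p \<le> mx j" using mem_F by auto
  moreover have "i < j \<or> j < i" using a by auto
  ultimately show False using sep[of i j] sep[of j i] a by auto
qed

lemma disj: "i < k \<Longrightarrow> j < k \<Longrightarrow> i \<noteq> j \<Longrightarrow> F ! i \<inter> F ! j = {}"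
  using uniq by blast

lemma distF: "distinct F"
proof -
  have "F ! i \<noteq> F ! j" if "i < k" "j < k" "i \<noteq> j" for i j
    using disj[OF that] Fi[OF that(1)] by auto
  then show ?thesis using lenF by (auto simp: distinct_conv_nth)
qed

lemma card_setF: "card (set F) = k" using distF lenF distinct_card by blast

lemma setF: "set F = (\<lambda>i. F ! i) ` {..<k}" using lenF by (auto simp: set_conv_nth)

end



definition idx :: "nat list \<Rightarrow> nat \<Rightarrow> nat" where
  "idx s v = the_inv_into {..<length s} ((!) s) v"

lemma inj_nth_distinct: "distinct s \<Longrightarrow> inj_on ((!) s) {..<length s}"
  by (auto simp: inj_on_def distinct_conv_nth)

lemma idx_nth: "distinct s \<Longrightarrow> j < length s \<Longrightarrow> idx s (s ! j) = j"
  unfolding idx_def by (rule the_inv_into_f_f) (auto simp: inj_nth_distinct)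

lemma nth_idx: "distinct s \<Longrightarrow> v \<in> set s \<Longrightarrow> s ! idx s v = v \<and> idx s v < length s"
proof -
  assume d: "distinct s" and v: "v \<in> set s"
  then have "v \<in> (!) s ` {..<length s}" by (auto simp: in_set_conv_nth)
  then show ?thesis unfolding idx_def
    using f_the_inv_into_f[OF inj_nth_distinct[OF d]] the_inv_into_into[OF inj_nth_distinct[OF d]]
    by auto
qed

context isys begin

definition inI :: "nat \<Rightarrow> bool" where "inI p \<longleftrightarrow> (\<exists>i<k. p \<in> F ! i)"
definition own :: "nat \<Rightarrow> nat" where "own p = (THE i. i < k \<and> p \<in> F ! i)"

lemma own: "i < k \<Longrightarrow> p \<in> F ! i \<Longrightarrow> own p = i"
  unfolding own_def by (rule the_equality) (use uniq in auto)

definition Phi :: "nat set list \<Rightarrow> (nat \<Rightarrow> nat \<Rightarrow> nat) \<Rightarrow> nat list \<Rightarrow> nat list" where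
  "Phi X \<pi> R = map (\<lambda>p. if inI p then sorted_list_of_set (X ! own p) ! (\<pi> (own p) (p - mn (own p)))
                        else R ! p) [0..<t]"

definition setsOf :: "nat list \<Rightarrow> nat set list" where
  "setsOf y = map (\<lambda>I. (!) y ` I) F"

definition Good :: "bool \<Rightarrow> nat list set" where
  "Good b = {y \<in> streams n t. (\<forall>i<k. inj_on ((!) y) (F ! i)) \<and> setsOf y \<in> USD_inputs n (Sizes F) b}"

definition Perms :: "(nat \<Rightarrow> nat \<Rightarrow> nat) set" where
  "Perms = PiE {..<k} (\<lambda>i. {p. p permutes {..<sz i}})"

definition Dom :: "bool \<Rightarrow> (nat set list \<times> (nat \<Rightarrow> nat \<Rightarrow> nat) \<times> nat list) set" where
  "Dom b = USD_inputs n (Sizes F) b \<times> (Perms \<times> streams n t)"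

definition Phi3 where "Phi3 d = Phi (fst d) (fst (snd d)) (snd (snd d))"

definition Rs :: "nat list \<Rightarrow> nat list set" where
  "Rs y = {R \<in> streams n t. \<forall>p<t. \<not> inI p \<longrightarrow> R ! p = y ! p}"

definition piy :: "nat list \<Rightarrow> nat \<Rightarrow> nat \<Rightarrow> nat" where
  "piy y = (\<lambda>i\<in>{..<k}. \<lambda>j. if j < sz i then idx (sorted_list_of_set ((!) y ` (F ! i))) (y ! (mn i + j)) else j)"

lemma USD_props:
  assumes "X \<in> USD_inputs n (Sizes F) b"
  shows "length X = k" "\<And>i. i < k \<Longrightarrow> X ! i \<subseteq> {..<n}" "\<And>i. i < k \<Longrightarrow> card (X ! i) = sz i"
    "\<And>i. i < k \<Longrightarrow> finite (X ! i)"
proof -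
  show "length X = k" using assms lenF by (simp add: USD_inputs_def Sizes_def)
  show "X ! i \<subseteq> {..<n}" if "i < k" for i using assms that lenF by (simp add: USD_inputs_def Sizes_def)
  show c: "card (X ! i) = sz i" if "i < k" for i using assms that lenF by (simp add: USD_inputs_def Sizes_def sz_def)
  show "finite (X ! i)" if "i < k" for i using c[OF that] sz_pos[OF that] card_ge_0_finite by force
qed

lemma shift_bij: "i < k \<Longrightarrow> bij_betw (\<lambda>p. p - mn i) (F ! i) {..<sz i}"
proof -
  assume i: "i < k"
  show ?thesis
  proof (rule bij_betwI[where g = "\<lambda>j. mn i + j"])
    show "(\<lambda>p. p - mn i) \<in> F ! i \<rightarrow> {..<sz i}"
    proof
      fix p assume "p \<in> F ! i"
      then have "mn i \<le> p" "p \<le> mx i" using mem_F[OF i] by auto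
      then show "p - mn i \<in> {..<sz i}" using sz_eq[OF i] by simp
    qed
    show "(\<lambda>j. mn i + j) \<in> {..<sz i} \<rightarrow> F ! i"
    proof
      fix j assume "j \<in> {..<sz i}"
      then have "mn i + j \<le> mx i" using sz_eq[OF i] by simp
      then show "mn i + j \<in> F ! i" using mem_F[OF i] by simp
    qed
    show "mn i + (p - mn i) = p" if "p \<in> F ! i" for p using that mem_F[OF i] by simp
    show "mn i + j - mn i = j" for j by simp
  qed
qed

lemma perm_bij: "\<pi> \<in> Perms \<Longrightarrow> i < k \<Longrightarrow> bij_betw (\<pi> i) {..<sz i} {..<sz i}"
proof -
  assume a: "\<pi> \<in> Perms" "i < k"
  then have "\<pi> i permutes {..<sz i}" unfolding Perms_def by auto
  then show ?thesis by (rule permutes_imp_bij)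
qed

lemma perm_out: "\<pi> \<in> Perms \<Longrightarrow> i < k \<Longrightarrow> j \<ge> sz i \<Longrightarrow> \<pi> i j = j"
proof -
  assume a: "\<pi> \<in> Perms" "i < k" "j \<ge> sz i"
  then have "\<pi> i permutes {..<sz i}" unfolding Perms_def by auto
  then show ?thesis using a(3) by (simp add: permutes_not_in)
qed

lemma Phi_len: "length (Phi X \<pi> R) = t" by (simp add: Phi_def)

lemma Phi_in: "i < k \<Longrightarrow> p \<in> F ! i \<Longrightarrow>
    Phi X \<pi> R ! p = sorted_list_of_set (X ! i) ! (\<pi> i (p - mn i))"
proof -
  assume a: "i < k" "p \<in> F ! i"
  have "inI p" unfolding inI_def using a by blast
  moreover have "p < t" using FsubT a by blast
  ultimately show ?thesis using own[OF a] by (simp add: Phi_def)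
qed

lemma Phi_out: "p < t \<Longrightarrow> \<not> inI p \<Longrightarrow> Phi X \<pi> R ! p = R ! p"
  by (simp add: Phi_def)

lemma Phi_image:
  assumes X: "X \<in> USD_inputs n (Sizes F) b" and \<pi>: "\<pi> \<in> Perms" and i: "i < k"
  shows "(!) (Phi X \<pi> R) ` (F ! i) = X ! i" "inj_on ((!) (Phi X \<pi> R)) (F ! i)"
proof -
  define s where "s = sorted_list_of_set (X ! i)"
  have fin: "finite (X ! i)" using USD_props(4)[OF X i] .
  have ds: "distinct s" "set s = X ! i" "length s = sz i"
    using fin USD_props(3)[OF X i] by (auto simp: s_def)
  have eq: "\<And>p. p \<in> F ! i \<Longrightarrow> Phi X \<pi> R ! p = ((!) s \<circ> \<pi> i \<circ> (\<lambda>p. p - mn i)) p"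
    using Phi_in[OF i] by (simp add: s_def)
  have b1: "bij_betw (\<lambda>p. p - mn i) (F ! i) {..<sz i}" by (rule shift_bij[OF i])
  have b2: "bij_betw (\<pi> i) {..<sz i} {..<sz i}" by (rule perm_bij[OF \<pi> i])
  have b3: "bij_betw ((!) s) {..<sz i} (X ! i)"
    unfolding bij_betw_def using ds inj_nth_distinct[of s] by (auto simp: set_conv_nth)
  have bb: "bij_betw ((!) s \<circ> \<pi> i \<circ> (\<lambda>p. p - mn i)) (F ! i) (X ! i)"
    by (rule bij_betw_trans[OF b1 bij_betw_trans[OF b2 b3]])
  have "(!) (Phi X \<pi> R) ` (F ! i) = ((!) s \<circ> \<pi> i \<circ> (\<lambda>p. p - mn i)) ` (F ! i)"
    using eq by (intro image_cong) auto
  then show "(!) (Phi X \<pi> R) ` (F ! i) = X ! i" using bb by (simp add: bij_betw_def)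
  show "inj_on ((!) (Phi X \<pi> R)) (F ! i)"
    using bb eq by (simp add: bij_betw_def inj_on_def)
qed

end


context isys begin

lemma Phi_Good:
  assumes d: "d \<in> Dom b"
  shows "Phi3 d \<in> Good b" "setsOf (Phi3 d) = fst d"
proof -
  obtain X \<pi> R where dd: "d = (X, \<pi>, R)" by (cases d) auto
  have X: "X \<in> USD_inputs n (Sizes F) b" and \<pi>: "\<pi> \<in> Perms" and R: "R \<in> streams n t"
    using d dd by (auto simp: Dom_def)
  let ?y = "Phi X \<pi> R"
  have img: "\<And>i. i < k \<Longrightarrow> (!) ?y ` (F ! i) = X ! i" using Phi_image(1)[OF X \<pi>] by blast
  have inj: "\<And>i. i < k \<Longrightarrow> inj_on ((!) ?y) (F ! i)" using Phi_image(2)[OF X \<pi>] by blast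
  have vals: "?y ! p < n" if p: "p < t" for p
  proof (cases "inI p")
    case True
    then obtain i where i: "i < k" "p \<in> F ! i" unfolding inI_def by blast
    then have "?y ! p \<in> X ! i" using img[OF i(1)] by blast
    then show ?thesis using USD_props(2)[OF X i(1)] by auto
  next
    case False
    then have "?y ! p = R ! p" using Phi_out p by blast
    then show ?thesis using R p by (auto simp: streams_nth)
  qed
  have st: "?y \<in> streams n t" unfolding streams_nth using vals Phi_len by auto
  have so: "setsOf ?y = X"
  proof (rule nth_equalityI)
    show "length (setsOf ?y) = length X" using USD_props(1)[OF X] lenF by (simp add: setsOf_def)
    show "setsOf ?y ! i = X ! i" if "i < length (setsOf ?y)" for i
      using that img lenF by (simp add: setsOf_def)
  qed
  show "setsOf (Phi3 d) = fst d" using so dd by (simp add: Phi3_def)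
  show "Phi3 d \<in> Good b" using st inj so X dd by (simp add: Good_def Phi3_def)
qed

lemma finite_USD: "finite (USD_inputs n sz' b)"
proof -
  have "USD_inputs n sz' b \<subseteq> {X. set X \<subseteq> Pow {..<n} \<and> length X = length sz'}"
  proof
    fix X assume "X \<in> USD_inputs n sz' b"
    then have a: "length X = length sz'" "\<forall>i<length sz'. X ! i \<subseteq> {..<n}"
      by (auto simp: USD_inputs_def)
    have "Y \<in> Pow {..<n}" if "Y \<in> set X" for Y
    proof -
      obtain i where "i < length X" "Y = X ! i" using \<open>Y \<in> set X\<close> by (auto simp: in_set_conv_nth)
      then show ?thesis using a by auto
    qed
    then have "set X \<subseteq> Pow {..<n}" by blast
    then show "X \<in> {X. set X \<subseteq> Pow {..<n} \<and> length X = length sz'}" using a by simp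
  qed
  then show ?thesis using finite_lists_length_eq[of "Pow {..<n}" "length sz'"] finite_subset by auto
qed

lemma finite_Perms: "finite Perms"
  unfolding Perms_def by (rule finite_PiE) (auto intro: finite_permutations)

lemma finite_Dom: "finite (Dom b)"
  unfolding Dom_def using finite_USD finite_Perms finite_streams by auto

lemma Good_facts:
  assumes y: "y \<in> Good b" and i: "i < k"
  shows "distinct (sorted_list_of_set ((!) y ` (F ! i)))"
    "set (sorted_list_of_set ((!) y ` (F ! i))) = (!) y ` (F ! i)"
    "length (sorted_list_of_set ((!) y ` (F ! i))) = sz i"
    "inj_on ((!) y) (F ! i)"
proof -
  show inj: "inj_on ((!) y) (F ! i)" using y i by (simp add: Good_def)
  have fin: "finite ((!) y ` (F ! i))" using finF[OF i] by simp
  show "distinct (sorted_list_of_set ((!) y ` (F ! i)))" by simp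
  show "set (sorted_list_of_set ((!) y ` (F ! i))) = (!) y ` (F ! i)" using fin by simp
  show "length (sorted_list_of_set ((!) y ` (F ! i))) = sz i"
    using inj by (simp add: card_image sz_def)
qed

lemma Good_facts2:
  assumes y: "y \<in> Good b"
  shows "setsOf y \<in> USD_inputs n (Sizes F) b" "y \<in> streams n t"
  using y by (auto simp: Good_def)

lemma piy_Perms: assumes y: "y \<in> Good b" shows "piy y \<in> Perms"
proof -
  have P1: "piy y i permutes {..<sz i}" if i: "i < k" for i
  proof -
    define s where "s = sorted_list_of_set ((!) y ` (F ! i))"
    note gf = Good_facts[OF y i, folded s_def]
    define f where "f = (\<lambda>j. if j < sz i then idx s (y ! (mn i + j)) else j)"
    have pf: "piy y i = f" unfolding piy_def f_def s_def using i by simp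
    have memF: "mn i + j \<in> F ! i" if "j < sz i" for j
    proof -
      have "mn i + j \<le> mx i" using that sz_eq[OF i] by simp
      then show ?thesis using mem_F[OF i] by simp
    qed
    have inset: "y ! (mn i + j) \<in> set s" if "j < sz i" for j
      using gf(2) memF[OF that] by blast
    have into: "f j < sz i" if "j < sz i" for j
    proof -
      have "idx s (y ! (mn i + j)) < length s" using nth_idx[OF gf(1) inset[OF that]] by blast
      then show ?thesis using gf(3) that by (simp add: f_def)
    qed
    have inj: "inj_on f {..<sz i}"
    proof (rule inj_onI)
      fix j j' assume a: "j \<in> {..<sz i}" "j' \<in> {..<sz i}" "f j = f j'"
      have jj: "j < sz i" "j' < sz i" using a(1,2) by auto
      have e1: "s ! f j = y ! (mn i + j)" using nth_idx[OF gf(1) inset[OF jj(1)]] jj(1) by (simp add: f_def)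
      have e2: "s ! f j' = y ! (mn i + j')" using nth_idx[OF gf(1) inset[OF jj(2)]] jj(2) by (simp add: f_def)
      have "y ! (mn i + j) = y ! (mn i + j')" using e1 e2 a(3) by simp
      then have "mn i + j = mn i + j'" using inj_onD[OF gf(4) _ memF[OF jj(1)] memF[OF jj(2)]] by blast
      then show "j = j'" by simp
    qed
    have sub: "f ` {..<sz i} \<subseteq> {..<sz i}" using into by blast
    have "f ` {..<sz i} = {..<sz i}"
      by (rule endo_inj_surj[OF _ sub inj]) simp
    then have "bij_betw f {..<sz i} {..<sz i}" using inj by (simp add: bij_betw_def)
    then have "f permutes {..<sz i}" by (rule bij_imp_permutes) (simp add: f_def)
    then show ?thesis using pf by simp
  qed
  have P2: "piy y i = undefined" if "i \<notin> {..<k}" for i using that by (simp add: piy_def)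
  show ?thesis unfolding Perms_def
  proof (intro PiE_I)
    fix x assume "x \<in> {..<k}"
    then show "piy y x \<in> {p. p permutes {..<sz x}}" using P1 by simp
  qed (use P2 in blast)
qed

lemma Phi_y:
  assumes y: "y \<in> Good b" and R: "R \<in> Rs y"
  shows "Phi (setsOf y) (piy y) R = y"
proof (rule nth_equalityI)
  have yst: "y \<in> streams n t" using y by (simp add: Good_def)
  then show "length (Phi (setsOf y) (piy y) R) = length y" by (simp add: Phi_len streams_def)
  fix p assume "p < length (Phi (setsOf y) (piy y) R)"
  then have p: "p < t" by (simp add: Phi_len)
  show "Phi (setsOf y) (piy y) R ! p = y ! p"
  proof (cases "inI p")
    case True
    then obtain i where i: "i < k" "p \<in> F ! i" unfolding inI_def by blast
    define s where "s = sorted_list_of_set ((!) y ` (F ! i))"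
    note gf = Good_facts[OF y i(1), folded s_def]
    have so: "setsOf y ! i = (!) y ` (F ! i)" using i lenF by (simp add: setsOf_def)
    have "mn i \<le> p" "p \<le> mx i" using mem_F[OF i(1)] i(2) by auto
    then have lt: "p - mn i < sz i" "mn i + (p - mn i) = p" using sz_eq[OF i(1)] by auto
    have "Phi (setsOf y) (piy y) R ! p = s ! (piy y i (p - mn i))"
      using Phi_in[OF i] so by (simp add: s_def)
    also have "piy y i (p - mn i) = idx s (y ! p)" using lt i by (simp add: piy_def s_def)
    also have "s ! idx s (y ! p) = y ! p" using nth_idx[OF gf(1)] gf(2) i(2) by blast
    finally show ?thesis .
  next
    case False
    then show ?thesis using Phi_out[OF p False] R p by (simp add: Rs_def)
  qed
qed

lemma fiber_eq:
  assumes y: "y \<in> Good b"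
  shows "{d \<in> Dom b. Phi3 d = y} = (\<lambda>R. (setsOf y, piy y, R)) ` Rs y"
proof
  show "(\<lambda>R. (setsOf y, piy y, R)) ` Rs y \<subseteq> {d \<in> Dom b. Phi3 d = y}"
  proof
    fix d assume "d \<in> (\<lambda>R. (setsOf y, piy y, R)) ` Rs y"
    then obtain R where R: "R \<in> Rs y" "d = (setsOf y, piy y, R)" by blast
    have "d \<in> Dom b" using R Good_facts2(1)[OF y] piy_Perms[OF y]
      by (simp add: Dom_def Rs_def)
    moreover have "Phi3 d = y" using Phi_y[OF y R(1)] R(2) by (simp add: Phi3_def)
    ultimately show "d \<in> {d \<in> Dom b. Phi3 d = y}" by blast
  qed
  show "{d \<in> Dom b. Phi3 d = y} \<subseteq> (\<lambda>R. (setsOf y, piy y, R)) ` Rs y"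
  proof
    fix d assume "d \<in> {d \<in> Dom b. Phi3 d = y}"
    then have d: "d \<in> Dom b" "Phi3 d = y" by auto
    obtain X \<pi> R where dd: "d = (X, \<pi>, R)" by (cases d) auto
    have X: "X \<in> USD_inputs n (Sizes F) b" and \<pi>: "\<pi> \<in> Perms" and Rst: "R \<in> streams n t"
      using d dd by (auto simp: Dom_def)
    have yP: "Phi X \<pi> R = y" using d dd by (simp add: Phi3_def)
    have Xe: "X = setsOf y" using Phi_Good(2)[OF d(1)] d(2) dd by simp
    have pe: "\<pi> = piy y"
    proof
      fix i show "\<pi> i = piy y i"
      proof (cases "i < k")
        case False
        then show ?thesis using \<pi> by (simp add: Perms_def PiE_def extensional_def piy_def)
      next
        case i: True
        define s where "s = sorted_list_of_set ((!) y ` (F ! i))"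
        note gf = Good_facts[OF y i, folded s_def]
        have sX: "sorted_list_of_set (X ! i) = s" using Xe i lenF by (simp add: setsOf_def s_def)
        show ?thesis
        proof
          fix j show "\<pi> i j = piy y i j"
          proof (cases "j < sz i")
            case True
            have mF: "mn i + j \<in> F ! i" using True mem_F[OF i] sz_eq[OF i] by auto
            have "y ! (mn i + j) = s ! (\<pi> i j)" using Phi_in[OF i mF, of X \<pi> R] yP sX by simp
            moreover have "\<pi> i j < length s" using perm_bij[OF \<pi> i] True gf(3)
              by (auto simp: bij_betw_def)
            ultimately have "idx s (y ! (mn i + j)) = \<pi> i j" using idx_nth[OF gf(1)] by simp
            then show ?thesis using True i by (simp add: piy_def s_def)
          next
            case False
            then show ?thesis using perm_out[OF \<pi> i] i by (simp add: piy_def)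
          qed
        qed
      qed
    qed
    have "R \<in> Rs y"
      unfolding Rs_def using Rst Phi_out[of _ X \<pi> R] yP by auto
    then show "d \<in> (\<lambda>R. (setsOf y, piy y, R)) ` Rs y" using dd Xe pe by blast
  qed
qed

lemma card_Rs:
  assumes y: "y \<in> streams n t"
  shows "card (Rs y) = (\<Prod>p<t. if inI p then n else 1)"
proof -
  have "Rs y = {xs. length xs = t \<and> (\<forall>p<t. xs ! p \<in> (if inI p then {..<n} else {y ! p}))}"
    using y by (auto simp: Rs_def streams_nth split: if_splits)
  then have "card (Rs y) = (\<Prod>p<t. card (if inI p then {..<n} else {y ! p}))"
    by (simp add: card_lists_nth)
  also have "\<dots> = (\<Prod>p<t. if inI p then n else 1)" by (intro prod.cong) auto
  finally show ?thesis .
qed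

lemma card_fiber:
  assumes y: "y \<in> Good b"
  shows "card {d \<in> Dom b. Phi3 d = y} = (\<Prod>p<t. if inI p then n else 1)"
proof -
  have "card {d \<in> Dom b. Phi3 d = y} = card (Rs y)"
    unfolding fiber_eq[OF y] by (rule card_image) (auto simp: inj_on_def)
  then show ?thesis using card_Rs Good_facts2(2)[OF y] lenF y
    by simp
qed

lemma y_in_Rs: "y \<in> streams n t \<Longrightarrow> y \<in> Rs y" by (simp add: Rs_def)

lemma map_Phi_Good:
  assumes ne: "Good b \<noteq> {}"
  shows "map_pmf Phi3 (pmf_of_set (Dom b)) = pmf_of_set (Good b)"
proof (rule pmf_of_set_fibers[OF finite_Dom])
  obtain y where y: "y \<in> Good b" using ne by blast
  have "(setsOf y, piy y, y) \<in> {d \<in> Dom b. Phi3 d = y}"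
    using fiber_eq[OF y] y_in_Rs[OF Good_facts2(2)[OF y]] by blast
  then show "Dom b \<noteq> {}" by blast
  show "Phi3 ` Dom b = Good b"
  proof
    show "Phi3 ` Dom b \<subseteq> Good b" using Phi_Good(1) by blast
    show "Good b \<subseteq> Phi3 ` Dom b"
    proof
      fix y assume y: "y \<in> Good b"
      then have "y \<in> Rs y" using y_in_Rs by (simp add: Good_def)
      then have "(setsOf y, piy y, y) \<in> {d \<in> Dom b. Phi3 d = y}" using fiber_eq[OF y] by blast
      then show "y \<in> Phi3 ` Dom b" by force
    qed
  qed
  show "card {a \<in> Dom b. Phi3 a = y} = (\<Prod>p<t. if inI p then n else 1)" if "y \<in> Good b" for y
    using card_fiber[OF that] .
qed

end


context isys begin

definition Aset :: "(nat set \<Rightarrow> nat) set" where "Aset = PiE_dflt (set F) 0 (\<lambda>I. I)"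
definition OmP :: "(nat \<times> (nat set \<Rightarrow> nat) \<times> nat list) set" where
  "OmP = {..<n} \<times> (Aset \<times> streams n t)"
definition gP :: "nat \<times> (nat set \<Rightarrow> nat) \<times> nat list \<Rightarrow> nat list" where
  "gP \<omega> = map (\<lambda>i. if (\<exists>I\<in>set F. fst (snd \<omega>) I = i) then fst \<omega> else snd (snd \<omega>) ! i) [0..<t]"

lemma finite_Aset: "finite Aset"
proof -
  have "\<And>I. I \<in> set F \<Longrightarrow> finite I"
  proof -
    fix I assume "I \<in> set F"
    then obtain i where "i < k" "I = F ! i" using setF by auto
    then show "finite I" using finF by simp
  qed
  then show ?thesis unfolding Aset_def by (intro finite_PiE_dflt) auto
qed

lemma Aset_ne: "Aset \<noteq> {}"
proof -
  have "\<forall>I\<in>set F. I \<noteq> {}"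
  proof
    fix I assume "I \<in> set F"
    then obtain i where "i < k" "I = F ! i" using setF by auto
    then show "I \<noteq> {}" using Fi(1,2)[of i] by auto
  qed
  then show ?thesis unfolding Aset_def by simp
qed

lemma finite_OmP: "finite OmP" unfolding OmP_def using finite_Aset finite_streams by auto
lemma OmP_ne: "OmP \<noteq> {}" unfolding OmP_def using Aset_ne streams_ne[OF npos] npos by auto

lemma planted_eq: "planted n t F = map_pmf gP (pmf_of_set OmP)"
proof -
  have fs: "finite (set F)" by simp
  have "\<And>I. I \<in> set F \<Longrightarrow> finite I" "\<And>I. I \<in> set F \<Longrightarrow> I \<noteq> {}"
    using setF finF Fi by auto
  then have Pi: "Pi_pmf (set F) 0 (\<lambda>I. pmf_of_set I) = pmf_of_set Aset"
    unfolding Aset_def by (intro Pi_pmf_of_set) auto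
  have ne1: "{..<n} \<noteq> {}" using npos by auto
  have ne3: "streams n t \<noteq> {}" using streams_ne[OF npos] by auto
  have "pmf_of_set OmP = pair_pmf (pmf_of_set {..<n}) (pair_pmf (pmf_of_set Aset) (pmf_of_set (streams n t)))"
    unfolding OmP_def
    by (simp add: pair_pmf_of_set finite_Aset Aset_ne finite_streams ne1 ne3)
  then have "map_pmf gP (pmf_of_set OmP) = pmf_of_set {..<n} \<bind>
     (\<lambda>x. pmf_of_set Aset \<bind> (\<lambda>a. pmf_of_set (streams n t) \<bind> (\<lambda>Y. return_pmf (gP (x, a, Y)))))"
    by (simp add: pair_pmf_def map_bind_pmf map_return_pmf bind_assoc_pmf bind_return_pmf)
  also have "\<dots> = planted n t F"
    unfolding planted_def Pi uniform_stream_def gP_def fst_conv snd_conv by (rule refl)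
  finally show ?thesis by simp
qed

definition V :: "nat list \<Rightarrow> nat set" where
  "V y = {x. x < n \<and> (\<forall>I\<in>set F. x \<in> (!) y ` I)}"
definition apos :: "nat list \<Rightarrow> nat \<Rightarrow> nat set \<Rightarrow> nat" where
  "apos y x = (\<lambda>I. if I \<in> set F then (THE p. p \<in> I \<and> y ! p = x) else 0)"
definition Ys :: "(nat set \<Rightarrow> nat) \<Rightarrow> nat list \<Rightarrow> nat list set" where
  "Ys a y = {Y \<in> streams n t. \<forall>p<t. p \<notin> a ` set F \<longrightarrow> Y ! p = y ! p}"

lemma apos_prop:
  assumes y: "y \<in> Good b" and x: "x \<in> V y" and I: "I \<in> set F"
  shows "apos y x I \<in> I" "y ! (apos y x I) = x" "\<And>p. p \<in> I \<Longrightarrow> y ! p = x \<Longrightarrow> p = apos y x I"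
proof -
  obtain i where i: "i < k" "I = F ! i" using I setF by blast
  have inj: "inj_on ((!) y) I" using Good_facts(4)[OF y i(1)] i by simp
  obtain p0 where p0: "p0 \<in> I" "y ! p0 = x" using x I unfolding V_def by blast
  have u: "\<And>p. p \<in> I \<and> y ! p = x \<Longrightarrow> p = p0"
  proof -
    fix p assume "p \<in> I \<and> y ! p = x"
    then show "p = p0" using inj_onD[OF inj, of p p0] p0 by simp
  qed
  have th: "(THE p. p \<in> I \<and> y ! p = x) = p0" by (rule the_equality) (use p0 u in blast)+
  have ap: "apos y x I = p0" using th I by (simp add: apos_def)
  show "apos y x I \<in> I" "y ! (apos y x I) = x" using ap p0 by auto
  show "\<And>p. p \<in> I \<Longrightarrow> y ! p = x \<Longrightarrow> p = apos y x I" using ap u by blast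
qed

lemma apos_Aset: "y \<in> Good b \<Longrightarrow> x \<in> V y \<Longrightarrow> apos y x \<in> Aset"
proof -
  assume a: "y \<in> Good b" "x \<in> V y"
  have "\<forall>I. (I \<in> set F \<longrightarrow> apos y x I \<in> I) \<and> (I \<notin> set F \<longrightarrow> apos y x I = 0)"
    using apos_prop(1)[OF a] by (simp add: apos_def)
  then show ?thesis unfolding Aset_def PiE_dflt_def by blast
qed

lemma a_inj:
  assumes a: "a \<in> Aset" shows "inj_on a (set F)" "\<And>I. I \<in> set F \<Longrightarrow> a I \<in> I"
proof -
  show m: "\<And>I. I \<in> set F \<Longrightarrow> a I \<in> I" using a unfolding Aset_def PiE_dflt_def by blast
  show "inj_on a (set F)"
  proof (rule inj_onI)
    fix I J assume IJ: "I \<in> set F" "J \<in> set F" "a I = a J"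
    obtain i where i: "i < k" "I = F ! i" using IJ(1) setF by auto
    obtain j where j: "j < k" "J = F ! j" using IJ(2) setF by auto
    have "a I \<in> F ! i" using m[OF IJ(1)] i by simp
    moreover have "a I \<in> F ! j" using m[OF IJ(2)] IJ(3) j by simp
    ultimately have "i = j" using uniq i j by blast
    then show "I = J" using i j by simp
  qed
qed

lemma prod_if_pow:
  assumes "S \<subseteq> {..<t}"
  shows "(\<Prod>p<t. if p \<in> S then (n::nat) else 1) = n ^ card S"
proof -
  have "(\<Prod>p<t. if p \<in> S then (n::nat) else 1) = (\<Prod>p\<in>{..<t} \<inter> {p. p \<in> S}. n) * (\<Prod>p\<in>{..<t} \<inter> - {p. p \<in> S}. 1)"
    by (rule prod.If_cases) simp
  also have "{..<t} \<inter> {p. p \<in> S} = S" using assms by auto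
  finally show ?thesis by simp
qed

lemma card_Ys:
  assumes a: "a \<in> Aset" and y: "y \<in> streams n t"
  shows "card (Ys a y) = n ^ k"
proof -
  have sub: "a ` set F \<subseteq> {..<t}"
  proof
    fix p assume "p \<in> a ` set F"
    then obtain I where I: "I \<in> set F" "p = a I" by blast
    obtain i where i: "i < k" "I = F ! i" using I setF by auto
    show "p \<in> {..<t}" using FsubT[OF i(1)] a_inj(2)[OF a I(1)] I i by auto
  qed
  have "Ys a y = {xs. length xs = t \<and> (\<forall>p<t. xs ! p \<in> (if p \<in> a ` set F then {..<n} else {y ! p}))}"
    using y unfolding Ys_def streams_nth by (auto split: if_splits)
  then have "card (Ys a y) = (\<Prod>p<t. card (if p \<in> a ` set F then {..<n} else {y ! p}))"
    by (simp add: card_lists_nth)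
  also have "\<dots> = (\<Prod>p<t. if p \<in> a ` set F then n else 1)" by (intro prod.cong) auto
  also have "\<dots> = n ^ card (a ` set F)" by (rule prod_if_pow[OF sub])
  also have "card (a ` set F) = k" using card_image[OF a_inj(1)[OF a]] card_setF by simp
  finally show ?thesis .
qed

end


context isys begin

lemma gP_nth: "p < t \<Longrightarrow> gP (x, a, Y) ! p = (if \<exists>I\<in>set F. a I = p then x else Y ! p)"
  by (simp add: gP_def)

lemma gP_len: "length (gP \<omega>) = t" by (simp add: gP_def)

lemma a_lt_t: "a \<in> Aset \<Longrightarrow> I \<in> set F \<Longrightarrow> a I < t"
proof -
  assume a: "a \<in> Aset" "I \<in> set F"
  obtain i where i: "i < k" "I = F ! i" using a(2) setF by blast
  show ?thesis using FsubT[OF i(1)] a_inj(2)[OF a] i by blast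
qed

lemma gP_fiber:
  assumes y: "y \<in> Good b"
  shows "{\<omega> \<in> OmP. gP \<omega> = y} = (\<lambda>(x, Y). (x, apos y x, Y)) ` (SIGMA x:V y. Ys (apos y x) y)"
proof
  show "{\<omega> \<in> OmP. gP \<omega> = y} \<subseteq> (\<lambda>(x, Y). (x, apos y x, Y)) ` (SIGMA x:V y. Ys (apos y x) y)"
  proof
    fix \<omega> assume "\<omega> \<in> {\<omega> \<in> OmP. gP \<omega> = y}"
    then have om: "\<omega> \<in> OmP" "gP \<omega> = y" by auto
    obtain x a Y where xaY: "\<omega> = (x, a, Y)" by (cases \<omega>) auto
    have x: "x < n" and a: "a \<in> Aset" and Y: "Y \<in> streams n t" using om(1) xaY by (auto simp: OmP_def)
    have ya: "y ! (a I) = x" if I: "I \<in> set F" for I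
    proof -
      have "a I < t" using a_lt_t[OF a I] .
      then show ?thesis using gP_nth[of "a I" x a Y] om(2) xaY I by auto
    qed
    have xV: "x \<in> V y"
      unfolding V_def using x ya a_inj(2)[OF a] by blast
    have ae: "a = apos y x"
    proof
      fix I show "a I = apos y x I"
      proof (cases "I \<in> set F")
        case True
        then show ?thesis using apos_prop(3)[OF y xV True] a_inj(2)[OF a True] ya[OF True] by blast
      next
        case False
        then have "a I = 0" using a unfolding Aset_def PiE_dflt_def by blast
        then show ?thesis using False by (simp add: apos_def)
      qed
    qed
    have YY: "Y \<in> Ys a y"
    proof -
      have "Y ! p = y ! p" if p: "p < t" "p \<notin> a ` set F" for p
      proof -
        have "\<not> (\<exists>I\<in>set F. a I = p)" using p(2) by blast
        then show ?thesis using gP_nth[OF p(1), of x a Y] om(2) xaY by simp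
      qed
      then show ?thesis using Y by (simp add: Ys_def)
    qed
    show "\<omega> \<in> (\<lambda>(x, Y). (x, apos y x, Y)) ` (SIGMA x:V y. Ys (apos y x) y)"
      using xV YY ae xaY by (auto intro!: image_eqI[where x = "(x, Y)"])
  qed
  show "(\<lambda>(x, Y). (x, apos y x, Y)) ` (SIGMA x:V y. Ys (apos y x) y) \<subseteq> {\<omega> \<in> OmP. gP \<omega> = y}"
  proof
    fix \<omega> assume "\<omega> \<in> (\<lambda>(x, Y). (x, apos y x, Y)) ` (SIGMA x:V y. Ys (apos y x) y)"
    then obtain x Y where xY: "x \<in> V y" "Y \<in> Ys (apos y x) y" "\<omega> = (x, apos y x, Y)" by auto
    have xn: "x < n" using xY(1) by (simp add: V_def)
    have Yst: "Y \<in> streams n t" using xY(2) by (simp add: Ys_def)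
    have inO: "\<omega> \<in> OmP" using xn Yst apos_Aset[OF y xY(1)] xY(3) by (simp add: OmP_def)
    have yst: "y \<in> streams n t" using Good_facts2(2)[OF y] .
    have "gP \<omega> = y"
    proof (rule nth_equalityI)
      show "length (gP \<omega>) = length y" using yst gP_len by (simp add: streams_def)
      fix p assume "p < length (gP \<omega>)"
      then have p: "p < t" by (simp add: gP_len)
      show "gP \<omega> ! p = y ! p"
      proof (cases "\<exists>I\<in>set F. apos y x I = p")
        case True
        then obtain I where I: "I \<in> set F" "apos y x I = p" by blast
        have "y ! p = x" using apos_prop(2)[OF y xY(1) I(1)] I(2) by simp
        then show ?thesis using True gP_nth[OF p] xY(3) by simp
      next
        case False
        then have "p \<notin> apos y x ` set F" by blast
        then have "Y ! p = y ! p" using xY(2) p by (simp add: Ys_def)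
        then show ?thesis using False gP_nth[OF p] xY(3) by simp
      qed
    qed
    then show "\<omega> \<in> {\<omega> \<in> OmP. gP \<omega> = y}" using inO by blast
  qed
qed

lemma finite_V: "finite (V y)" unfolding V_def by simp

lemma card_gP_fiber:
  assumes y: "y \<in> Good b"
  shows "card {\<omega> \<in> OmP. gP \<omega> = y} = card (V y) * n ^ k"
proof -
  have inj: "inj_on (\<lambda>(x, Y). (x, apos y x, Y)) (SIGMA x:V y. Ys (apos y x) y)"
  proof (rule inj_onI)
    fix u v assume "u \<in> (SIGMA x:V y. Ys (apos y x) y)" "v \<in> (SIGMA x:V y. Ys (apos y x) y)"
      "(\<lambda>(x, Y). (x, apos y x, Y)) u = (\<lambda>(x, Y). (x, apos y x, Y)) v"
    then show "u = v" by (cases u, cases v) simp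
  qed
  have finY: "\<And>x. finite (Ys (apos y x) y)"
  proof -
    fix x show "finite (Ys (apos y x) y)"
      by (rule finite_subset[OF _ finite_streams[of n t]]) (auto simp: Ys_def)
  qed
  have "card {\<omega> \<in> OmP. gP \<omega> = y} = card (SIGMA x:V y. Ys (apos y x) y)"
    unfolding gP_fiber[OF y] using card_image[OF inj] .
  also have "\<dots> = (\<Sum>x\<in>V y. card (Ys (apos y x) y))"
    using finite_V finY by (simp add: card_SigmaI)
  also have "\<dots> = (\<Sum>x\<in>V y. n ^ k)"
    using card_Ys[OF apos_Aset[OF y] Good_facts2(2)[OF y]] by simp
  finally show ?thesis by simp
qed

lemma card_V:
  assumes y: "y \<in> Good True"
  shows "card (V y) = (if k = 0 then n else if k = 1 then sz 0 else 1)"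
proof -
  have yst: "y \<in> streams n t" using Good_facts2(2)[OF y] .
  have USD: "setsOf y \<in> USD_inputs n (Sizes F) True" using Good_facts2(1)[OF y] .
  show ?thesis
  proof (cases "k = 0")
    case True
    then have "set F = {}" using lenF by simp
    then have "V y = {..<n}" unfolding V_def by auto
    then show ?thesis using True by simp
  next
    case k0: False
    show ?thesis
    proof (cases "k = 1")
      case True
      then have sF: "set F = {F ! 0}" using lenF by (cases F) auto
      have sub: "\<And>v. v \<in> (!) y ` (F ! 0) \<Longrightarrow> v < n"
      proof -
        fix v assume "v \<in> (!) y ` (F ! 0)"
        then obtain p where p: "p \<in> F ! 0" "v = y ! p" by blast
        have "p < t" using FsubT[of 0 p] p(1) True by simp
        then show "v < n" using yst p(2) by (simp add: streams_nth)
      qed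
      have "V y = (!) y ` (F ! 0)"
      proof
        show "V y \<subseteq> (!) y ` (F ! 0)" unfolding V_def sF by blast
        show "(!) y ` (F ! 0) \<subseteq> V y" unfolding V_def sF using sub by blast
      qed
      then have "card (V y) = card (F ! 0)"
        using card_image[OF Good_facts(4)[OF y, of 0]] True by simp
      then show ?thesis using True by (simp add: sz_def)
    next
      case k1: False
      then have k2: "k \<ge> 2" using k0 by simp
      have "uniquely_intersecting n (setsOf y)" using USD by (simp add: USD_inputs_def)
      then obtain c where cc: "c < n \<and> (\<forall>i<length (setsOf y). c \<in> setsOf y ! i) \<and>
        (\<forall>i j. i < length (setsOf y) \<longrightarrow> j < length (setsOf y) \<longrightarrow> i \<noteq> j \<longrightarrow> setsOf y ! i \<inter> setsOf y ! j = {c})"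
        unfolding uniquely_intersecting_def by (elim exE) (rule that)
      then have c: "c < n" "\<forall>i<length (setsOf y). c \<in> setsOf y ! i"
        "\<forall>i j. i < length (setsOf y) \<longrightarrow> j < length (setsOf y) \<longrightarrow> i \<noteq> j \<longrightarrow> setsOf y ! i \<inter> setsOf y ! j = {c}"
        by auto
      have ls: "length (setsOf y) = k" using lenF by (simp add: setsOf_def)
      have so: "setsOf y ! i = (!) y ` (F ! i)" if "i < k" for i
        using that lenF unfolding setsOf_def by simp
      have "V y = {c}"
      proof
        show "{c} \<subseteq> V y"
        proof -
          have cI: "c \<in> (!) y ` I" if I: "I \<in> set F" for I
          proof -
            obtain i where i: "i < k" "I = F ! i" using I setF by blast
            have "c \<in> setsOf y ! i" using c(2) ls i(1) by metis
            then show ?thesis using so[OF i(1)] i(2) by simp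
          qed
          have "c \<in> V y" unfolding V_def using c(1) cI by blast
          then show ?thesis by blast
        qed
        show "V y \<subseteq> {c}"
        proof
          fix v assume v: "v \<in> V y"
          have k01: "0 < k" "1 < k" using k2 by auto
          have "F ! 0 \<in> set F" "F ! 1 \<in> set F" using k01 lenF by auto
          then have "v \<in> (!) y ` (F ! 0)" "v \<in> (!) y ` (F ! 1)" using v unfolding V_def by blast+
          then have "v \<in> setsOf y ! 0 \<inter> setsOf y ! 1" using so[OF k01(1)] so[OF k01(2)] by simp
          moreover have "setsOf y ! 0 \<inter> setsOf y ! 1 = {c}" using c(3) ls k01 by (metis zero_neq_one)
          ultimately show "v \<in> {c}" by blast
        qed
      qed
      then show ?thesis using k0 k1 by simp
    qed
  qed
qed

definition G2 where "G2 = {\<omega> \<in> OmP. gP \<omega> \<in> Good True}"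

lemma map_gP_G2:
  assumes ne: "G2 \<noteq> {}"
  shows "map_pmf gP (pmf_of_set G2) = pmf_of_set (Good True)"
proof (rule pmf_of_set_fibers)
  show "finite G2" using finite_OmP by (simp add: G2_def)
  show "G2 \<noteq> {}" by (rule ne)
  have fib: "{a \<in> G2. gP a = y} = {\<omega> \<in> OmP. gP \<omega> = y}" if "y \<in> Good True" for y
    using that unfolding G2_def by blast
  show "card {a \<in> G2. gP a = y} = (if k = 0 then n else if k = 1 then sz 0 else 1) * n ^ k"
    if "y \<in> Good True" for y
    using fib[OF that] card_gP_fiber[OF that] card_V[OF that] by simp
  show "gP ` G2 = Good True"
  proof
    show "gP ` G2 \<subseteq> Good True" unfolding G2_def by blast
    show "Good True \<subseteq> gP ` G2"
    proof
      fix y assume y: "y \<in> Good True"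
      have "card (V y) > 0"
      proof (cases "k = 0")
        case True then show ?thesis using card_V[OF y] npos by simp
      next
        case False then show ?thesis using card_V[OF y] sz_pos[of 0] by simp
      qed
      then have "V y \<noteq> {}" by (metis card.empty less_irrefl)
      then obtain x where x: "x \<in> V y" by blast
      have "y \<in> Ys (apos y x) y" using Good_facts2(2)[OF y] by (simp add: Ys_def)
      then have "(x, y) \<in> (SIGMA x:V y. Ys (apos y x) y)" using x by blast
      then have "(\<lambda>(x, Y). (x, apos y x, Y)) (x, y) \<in> (\<lambda>(x, Y). (x, apos y x, Y)) ` (SIGMA x:V y. Ys (apos y x) y)"
        by (rule imageI)
      then have "(x, apos y x, y) \<in> {\<omega> \<in> OmP. gP \<omega> = y}" unfolding gP_fiber[OF y] by simp
      then have "(x, apos y x, y) \<in> OmP" "gP (x, apos y x, y) = y" by blast+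
      then have "(x, apos y x, y) \<in> G2" "gP (x, apos y x, y) = y" using y unfolding G2_def by simp_all
      then show "y \<in> gP ` G2" by (metis imageI)
    qed
  qed
qed

end


context isys begin

lemma setsOf_USD:
  assumes y: "y \<in> streams n t" and inj: "\<And>i. i < k \<Longrightarrow> inj_on ((!) y) (F ! i)"
    and P: "if b then uniquely_intersecting n (setsOf y) else pw_disjoint (setsOf y)"
  shows "setsOf y \<in> USD_inputs n (Sizes F) b"
proof -
  have len: "length (setsOf y) = length (Sizes F)" by (simp add: setsOf_def Sizes_def)
  have "setsOf y ! i \<subseteq> {..<n} \<and> card (setsOf y ! i) = Sizes F ! i" if i: "i < length (Sizes F)" for i
  proof -
    have ik: "i < k" using i lenF by (simp add: Sizes_def)
    have so: "setsOf y ! i = (!) y ` (F ! i)" using ik lenF unfolding setsOf_def by simp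
    have sub: "(!) y ` (F ! i) \<subseteq> {..<n}"
    proof
      fix v assume "v \<in> (!) y ` (F ! i)"
      then obtain p where p: "p \<in> F ! i" "v = y ! p" by blast
      have "p < t" using FsubT[OF ik p(1)] .
      then show "v \<in> {..<n}" using y p(2) by (simp add: streams_nth)
    qed
    have "card ((!) y ` (F ! i)) = card (F ! i)" using card_image[OF inj[OF ik]] .
    then show ?thesis using so sub ik lenF by (simp add: Sizes_def)
  qed
  then show ?thesis using len P unfolding USD_inputs_def by blast
qed

definition distY :: "nat list \<Rightarrow> bool" where
  "distY Y \<longleftrightarrow> (\<forall>p<t. \<forall>q<t. p \<noteq> q \<longrightarrow> Y ! p \<noteq> Y ! q)"

lemma distY_D: "distY Y \<Longrightarrow> p < t \<Longrightarrow> q < t \<Longrightarrow> Y ! p = Y ! q \<Longrightarrow> p = q"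
  unfolding distY_def by blast

lemma Good_False_intro:
  assumes Y: "Y \<in> streams n t" and d: "distY Y"
  shows "Y \<in> Good False"
proof -
  have inj: "inj_on ((!) Y) (F ! i)" if i: "i < k" for i
  proof (rule inj_onI)
    fix p q assume "p \<in> F ! i" "q \<in> F ! i" "Y ! p = Y ! q"
    then show "p = q" using distY_D[OF d FsubT[OF i] FsubT[OF i]] by blast
  qed
  have "pw_disjoint (setsOf Y)"
    unfolding pw_disjoint_def
  proof (intro allI impI)
    fix i j assume ij: "i < length (setsOf Y)" "j < length (setsOf Y)" "i \<noteq> j"
    then have ik: "i < k" "j < k" using lenF unfolding setsOf_def by simp_all
    have so: "setsOf Y ! i = (!) Y ` (F ! i)" "setsOf Y ! j = (!) Y ` (F ! j)"
      using ik lenF unfolding setsOf_def by simp_all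
    show "setsOf Y ! i \<inter> setsOf Y ! j = {}"
    proof (rule ccontr)
      assume "setsOf Y ! i \<inter> setsOf Y ! j \<noteq> {}"
      then obtain v where "v \<in> (!) Y ` (F ! i)" "v \<in> (!) Y ` (F ! j)" using so by auto
      then obtain p q where pq: "p \<in> F ! i" "q \<in> F ! j" "Y ! p = Y ! q" by (metis imageE)
      have "p \<noteq> q" using pq(1,2) disj[OF ik ij(3)] by blast
      then show False using distY_D[OF d FsubT[OF ik(1) pq(1)] FsubT[OF ik(2) pq(2)] pq(3)] by blast
    qed
  qed
  then have "setsOf Y \<in> USD_inputs n (Sizes F) False"
    using setsOf_USD[OF Y inj, of False] by simp
  then show ?thesis using Y inj unfolding Good_def by blast
qed

lemma needle_iff:
  assumes a: "a \<in> Aset" and i: "i < k" and p: "p \<in> F ! i"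
  shows "(\<exists>I\<in>set F. a I = p) \<longleftrightarrow> p = a (F ! i)"
proof
  assume "\<exists>I\<in>set F. a I = p"
  then obtain I where I: "I \<in> set F" "a I = p" by blast
  obtain j where j: "j < k" "I = F ! j" using I(1) setF by blast
  have "p \<in> F ! j" using a_inj(2)[OF a I(1)] I(2) j(2) by simp
  then have "j = i" using uniq[OF j(1) i _ p] by simp
  then show "p = a (F ! i)" using I(2) j(2) by simp
next
  assume "p = a (F ! i)"
  moreover have "F ! i \<in> set F" using i lenF by simp
  ultimately show "\<exists>I\<in>set F. a I = p" by blast
qed

lemma Good_True_intro:
  assumes om: "(x, a, Y) \<in> OmP" and d: "distY Y" and dx: "\<forall>p<t. Y ! p \<noteq> x"
  shows "gP (x, a, Y) \<in> Good True"
proof -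
  have x: "x < n" and a: "a \<in> Aset" and Y: "Y \<in> streams n t" using om by (auto simp: OmP_def)
  define y where "y = gP (x, a, Y)"
  have yv: "y ! p = (if p = a (F ! i) then x else Y ! p)" if i: "i < k" and p: "p \<in> F ! i" for i p
    using gP_nth[OF FsubT[OF i p], of x a Y] needle_iff[OF a i p] by (simp add: y_def)
  have aF: "a (F ! i) \<in> F ! i" if i: "i < k" for i using a_inj(2)[OF a] i lenF by simp
  have yst: "y \<in> streams n t"
  proof -
    have "y ! p < n" if p: "p < t" for p
      using gP_nth[OF p, of x a Y] x Y p by (auto simp: y_def streams_nth)
    then show ?thesis unfolding streams_nth using gP_len by (simp add: y_def)
  qed
  have Ydist: "Y ! p \<noteq> Y ! q" if "p < t" "q < t" "p \<noteq> q" for p q using distY_D[OF d that(1,2)] that(3) by blast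
  have inj: "inj_on ((!) y) (F ! i)" if i: "i < k" for i
  proof (rule inj_onI)
    fix p q assume pq: "p \<in> F ! i" "q \<in> F ! i" "y ! p = y ! q"
    have pt: "p < t" "q < t" using FsubT[OF i] pq by auto
    show "p = q"
    proof (cases "p = a (F ! i)")
      case True
      show ?thesis
      proof (cases "q = a (F ! i)")
        case True then show ?thesis using \<open>p = a (F ! i)\<close> by simp
      next
        case False
        then have "y ! q = Y ! q" "y ! p = x" using yv[OF i pq(2)] yv[OF i pq(1)] \<open>p = a (F ! i)\<close> by auto
        then show ?thesis using pq(3) dx pt by auto
      qed
    next
      case pF: False
      show ?thesis
      proof (cases "q = a (F ! i)")
        case True
        then have "y ! q = x" "y ! p = Y ! p" using yv[OF i pq(2)] yv[OF i pq(1)] pF by auto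
        then show ?thesis using pq(3) dx pt by auto
      next
        case False
        then have "y ! q = Y ! q" "y ! p = Y ! p" using yv[OF i pq(2)] yv[OF i pq(1)] pF by auto
        then show ?thesis using pq(3) Ydist pt by metis
      qed
    qed
  qed
  have ui: "uniquely_intersecting n (setsOf y)"
    unfolding uniquely_intersecting_def
  proof (intro exI[of _ x] conjI allI impI)
    show "x < n" by (rule x)
    fix i assume "i < length (setsOf y)"
    then have i: "i < k" using lenF by (simp add: setsOf_def)
    have "y ! a (F ! i) = x" using yv[OF i aF[OF i]] by simp
    then show "x \<in> setsOf y ! i" using aF[OF i] i lenF unfolding setsOf_def by force
  next
    fix i j assume ij: "i < length (setsOf y)" "j < length (setsOf y)" "i \<noteq> j"
    then have ik: "i < k" "j < k" using lenF unfolding setsOf_def by simp_all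
    have so: "setsOf y ! i = (!) y ` (F ! i)" "setsOf y ! j = (!) y ` (F ! j)"
      using ik lenF unfolding setsOf_def by simp_all
    show "setsOf y ! i \<inter> setsOf y ! j = {x}"
    proof
      show "{x} \<subseteq> setsOf y ! i \<inter> setsOf y ! j"
      proof -
        have "y ! a (F ! i) = x" "y ! a (F ! j) = x" using yv[OF ik(1) aF[OF ik(1)]] yv[OF ik(2) aF[OF ik(2)]] by simp_all
        then have "x \<in> (!) y ` (F ! i)" "x \<in> (!) y ` (F ! j)" using aF ik by (metis imageI)+
        then show ?thesis using so by simp
      qed
      show "setsOf y ! i \<inter> setsOf y ! j \<subseteq> {x}"
      proof
        fix v assume "v \<in> setsOf y ! i \<inter> setsOf y ! j"
        then obtain p q where pq: "p \<in> F ! i" "q \<in> F ! j" "v = y ! p" "v = y ! q" using so by auto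
        have pt: "p < t" "q < t" using FsubT ik pq by auto
        have pnq: "p \<noteq> q" using pq(1,2) disj[OF ik ij(3)] by blast
        show "v \<in> {x}"
        proof (cases "p = a (F ! i) \<or> q = a (F ! j)")
          case True
          then have "v = x" using yv[OF ik(1) pq(1)] yv[OF ik(2) pq(2)] pq(3,4) by auto
          then show ?thesis by simp
        next
          case False
          then have "y ! p = Y ! p" "y ! q = Y ! q" using yv[OF ik(1) pq(1)] yv[OF ik(2) pq(2)] by auto
          then have "Y ! p = Y ! q" using pq(3,4) by simp
          then show ?thesis using Ydist[OF pt pnq] by simp
        qed
      qed
    qed
  qed
  have "setsOf y \<in> USD_inputs n (Sizes F) True" using setsOf_USD[OF yst inj, of True] ui by simp
  then show ?thesis using yst inj unfolding Good_def y_def by blast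
qed

end



lemma card_coll_streams:
  assumes p: "p < t" and q: "q < t" and pq: "p \<noteq> q"
  shows "card {Y \<in> streams n t. Y ! p = Y ! q} * n = card (streams n t)"
proof -
  let ?E = "{Y \<in> streams n t. Y ! p = Y ! q}"
  have "bij_betw (\<lambda>(Y, v). Y[q := v]) (?E \<times> {..<n}) (streams n t)"
  proof (rule bij_betwI[where g = "\<lambda>Z. (Z[q := Z ! p], Z ! q)"])
    show "(\<lambda>(Y, v). Y[q := v]) \<in> ?E \<times> {..<n} \<rightarrow> streams n t"
    proof
      fix z assume "z \<in> ?E \<times> {..<n}"
      then obtain Y v where z: "z = (Y, v)" "Y \<in> streams n t" "v < n" by auto
      then show "(\<lambda>(Y, v). Y[q := v]) z \<in> streams n t"
        by (auto simp: streams_def set_update_subset_insert[THEN subset_trans])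
    qed
    show "(\<lambda>Z. (Z[q := Z ! p], Z ! q)) \<in> streams n t \<rightarrow> ?E \<times> {..<n}"
    proof
      fix Z assume Z: "Z \<in> streams n t"
      then have l: "length Z = t" "\<forall>i<t. Z ! i < n" by (auto simp: streams_nth)
      have "Z[q := Z ! p] \<in> streams n t" using Z l p q
        by (auto simp: streams_def set_update_subset_insert[THEN subset_trans])
      moreover have "Z[q := Z ! p] ! p = Z[q := Z ! p] ! q" using l p q pq by simp
      moreover have "Z ! q < n" using l q by simp
      ultimately show "(\<lambda>Z. (Z[q := Z ! p], Z ! q)) Z \<in> ?E \<times> {..<n}" by simp
    qed
    show "(\<lambda>Z. (Z[q := Z ! p], Z ! q)) ((\<lambda>(Y, v). Y[q := v]) z) = z" if "z \<in> ?E \<times> {..<n}" for z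
    proof -
      obtain Y v where z0: "z = (Y, v)" by (cases z)
      then have z: "z = (Y, v)" "Y \<in> streams n t" "Y ! p = Y ! q" using that by auto
      have l: "length Y = t" using z(2) by (simp add: streams_def)
      have "(Y[q := v])[q := (Y[q := v]) ! p] = Y" using z(3) pq l q by (simp add: list_update_same_conv)
      moreover have "Y[q := v] ! q = v" using l q by simp
      ultimately show ?thesis using z(1) by simp
    qed
    show "(\<lambda>(Y, v). Y[q := v]) ((\<lambda>Z. (Z[q := Z ! p], Z ! q)) Z) = Z" if "Z \<in> streams n t" for Z
      by simp
  qed
  then have "card (?E \<times> {..<n}) = card (streams n t)" by (rule bij_betw_same_card)
  then show ?thesis by (simp add: card_cartesian_product)
qed

context isys begin

lemma card_UN2_le:
  fixes A :: "nat \<Rightarrow> nat \<Rightarrow> 'a set"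
  assumes "\<And>p q. finite (A p q)"
  shows "card (\<Union>p<t. \<Union>q<t. A p q) \<le> (\<Sum>p<t. \<Sum>q<t. card (A p q))"
proof -
  have "card (\<Union>p<t. \<Union>q<t. A p q) \<le> (\<Sum>p<t. card (\<Union>q<t. A p q))"
    by (rule card_UN_le) simp
  also have "\<dots> \<le> (\<Sum>p<t. \<Sum>q<t. card (A p q))"
    by (intro sum_mono card_UN_le) simp
  finally show ?thesis .
qed

lemma bad_uniform: "n * card (streams n t - Good False) \<le> t * t * card (streams n t)"
proof -
  define E where "E p q = {Y \<in> streams n t. p \<noteq> q \<and> Y ! p = Y ! q}" for p q
  have finE: "finite (E p q)" for p q unfolding E_def using finite_streams[of n t] by simp
  have sub: "streams n t - Good False \<subseteq> (\<Union>p<t. \<Union>q<t. E p q)"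
  proof
    fix Y assume Y: "Y \<in> streams n t - Good False"
    then have "\<not> distY Y" using Good_False_intro by blast
    then obtain p q where "p < t" "q < t" "p \<noteq> q" "Y ! p = Y ! q" unfolding distY_def by blast
    then show "Y \<in> (\<Union>p<t. \<Union>q<t. E p q)" using Y unfolding E_def by blast
  qed
  have eb: "n * card (E p q) \<le> card (streams n t)" if "p < t" "q < t" for p q
  proof (cases "p = q")
    case True then show ?thesis by (simp add: E_def)
  next
    case False
    then have "E p q = {Y \<in> streams n t. Y ! p = Y ! q}" by (simp add: E_def)
    then show ?thesis using card_coll_streams[OF that False, of n] by (simp add: mult.commute)
  qed
  have "n * card (streams n t - Good False) \<le> n * card (\<Union>p<t. \<Union>q<t. E p q)"
    using card_mono[OF _ sub] finE by simp
  also have "\<dots> \<le> n * (\<Sum>p<t. \<Sum>q<t. card (E p q))"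
    using card_UN2_le[OF finE] by simp
  also have "\<dots> = (\<Sum>p<t. \<Sum>q<t. n * card (E p q))" by (simp add: sum_distrib_left)
  also have "\<dots> \<le> (\<Sum>p<t. \<Sum>q<t. card (streams n t))"
    by (intro sum_mono) (use eb in auto)
  also have "\<dots> = t * t * card (streams n t)" by simp
  finally show ?thesis .
qed

lemma bad_planted: "n * card (OmP - G2) \<le> (t * t + t) * card OmP"
proof -
  define S1 where "S1 p q = {\<omega> \<in> OmP. p \<noteq> q \<and> snd (snd \<omega>) ! p = snd (snd \<omega>) ! q}" for p q
  define S2 where "S2 p = {\<omega> \<in> OmP. snd (snd \<omega>) ! p = fst \<omega>}" for p
  have fin1: "finite (S1 p q)" for p q unfolding S1_def using finite_OmP by simp
  have fin2: "finite (S2 p)" for p unfolding S2_def using finite_OmP by simp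
  have sub: "OmP - G2 \<subseteq> (\<Union>p<t. \<Union>q<t. S1 p q) \<union> (\<Union>p<t. S2 p)"
  proof
    fix \<omega> assume om: "\<omega> \<in> OmP - G2"
    obtain x a Y where xaY: "\<omega> = (x, a, Y)" by (cases \<omega>) auto
    have "\<not> (distY Y \<and> (\<forall>p<t. Y ! p \<noteq> x))"
      using Good_True_intro[of x a Y] om xaY unfolding G2_def by blast
    then show "\<omega> \<in> (\<Union>p<t. \<Union>q<t. S1 p q) \<union> (\<Union>p<t. S2 p)"
    proof (cases "distY Y")
      case False
      then obtain p q where "p < t" "q < t" "p \<noteq> q" "Y ! p = Y ! q" unfolding distY_def by blast
      then have "\<omega> \<in> S1 p q" using om xaY unfolding S1_def by simp
      then show ?thesis using \<open>p < t\<close> \<open>q < t\<close> by blast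
    next
      case True
      then have "\<not> (\<forall>p<t. Y ! p \<noteq> x)" using \<open>\<not> (distY Y \<and> (\<forall>p<t. Y ! p \<noteq> x))\<close> by blast
      then obtain p where "p < t" "Y ! p = x" by blast
      then have "\<omega> \<in> S2 p" using om xaY unfolding S2_def by simp
      then show ?thesis using \<open>p < t\<close> by blast
    qed
  qed
  have cOm: "card OmP = n * (card Aset * card (streams n t))"
    unfolding OmP_def by (simp add: card_cartesian_product)
  have b1: "n * card (S1 p q) \<le> card OmP" if "p < t" "q < t" for p q
  proof (cases "p = q")
    case True then show ?thesis by (simp add: S1_def)
  next
    case False
    have "S1 p q = {..<n} \<times> (Aset \<times> {Y \<in> streams n t. Y ! p = Y ! q})"
      using False unfolding S1_def OmP_def by auto
    then have "card (S1 p q) = n * (card Aset * card {Y \<in> streams n t. Y ! p = Y ! q})"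
      by (simp add: card_cartesian_product)
    then have "n * card (S1 p q) = n * (card Aset * (card {Y \<in> streams n t. Y ! p = Y ! q} * n))"
      by (simp add: algebra_simps)
    also have "\<dots> = card OmP" using card_coll_streams[OF that False, of n] cOm by simp
    finally show ?thesis by simp
  qed
  have b2: "n * card (S2 p) \<le> card OmP" if "p < t" for p
  proof -
    have "S2 p = (\<lambda>(a, Y). (Y ! p, a, Y)) ` (Aset \<times> streams n t)"
    proof
      show "S2 p \<subseteq> (\<lambda>(a, Y). (Y ! p, a, Y)) ` (Aset \<times> streams n t)"
      proof
        fix \<omega> assume "\<omega> \<in> S2 p"
        then obtain x a Y where "\<omega> = (x, a, Y)" "a \<in> Aset" "Y \<in> streams n t" "Y ! p = x"
          unfolding S2_def OmP_def by auto
        then show "\<omega> \<in> (\<lambda>(a, Y). (Y ! p, a, Y)) ` (Aset \<times> streams n t)" by force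
      qed
      show "(\<lambda>(a, Y). (Y ! p, a, Y)) ` (Aset \<times> streams n t) \<subseteq> S2 p"
      proof
        fix \<omega> assume "\<omega> \<in> (\<lambda>(a, Y). (Y ! p, a, Y)) ` (Aset \<times> streams n t)"
        then obtain a Y where aY: "\<omega> = (Y ! p, a, Y)" "a \<in> Aset" "Y \<in> streams n t" by auto
        then have "Y ! p < n" using that by (simp add: streams_nth)
        then show "\<omega> \<in> S2 p" using aY unfolding S2_def OmP_def by simp
      qed
    qed
    moreover have "inj_on (\<lambda>(a, Y). (Y ! p, a, Y)) (Aset \<times> streams n t)"
      by (rule inj_onI) auto
    ultimately have "card (S2 p) = card Aset * card (streams n t)"
      by (simp add: card_image card_cartesian_product)
    then show ?thesis using cOm by simp
  qed
  have "n * card (OmP - G2) \<le> n * card ((\<Union>p<t. \<Union>q<t. S1 p q) \<union> (\<Union>p<t. S2 p))"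
    using card_mono[OF _ sub] fin1 fin2 by simp
  also have "\<dots> \<le> n * (card (\<Union>p<t. \<Union>q<t. S1 p q) + card (\<Union>p<t. S2 p))"
    by (intro mult_le_mono2 card_Un_le)
  also have "\<dots> \<le> n * ((\<Sum>p<t. \<Sum>q<t. card (S1 p q)) + (\<Sum>p<t. card (S2 p)))"
    using card_UN2_le[OF fin1] card_UN_le[of "{..<t}" S2] by (intro mult_le_mono2 add_mono) auto
  also have "\<dots> = (\<Sum>p<t. \<Sum>q<t. n * card (S1 p q)) + (\<Sum>p<t. n * card (S2 p))"
    by (simp add: sum_distrib_left algebra_simps)
  also have "\<dots> \<le> (\<Sum>p<t. \<Sum>q<t. card OmP) + (\<Sum>p<t. card OmP)"
    by (intro add_mono sum_mono) (use b1 b2 in auto)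
  also have "\<dots> = (t * t + t) * card OmP" by (simp add: algebra_simps)
  finally show ?thesis .
qed

end



lemma fold_concat': "fold f (concat xss) s = fold (\<lambda>xs. fold f xs) xss s"
  by (induction xss arbitrary: s) auto

lemma mono_chain: "(\<And>i. i < N \<Longrightarrow> c i \<le> c (Suc i)) \<Longrightarrow> c (0::nat) \<le> (c N :: nat)"
proof (induction N)
  case 0 then show ?case by simp
next
  case (Suc N) then show ?case by (metis le_trans less_Suc_eq)
qed

lemma upt_concat:
  assumes "\<And>i. i < N \<Longrightarrow> c i \<le> c (Suc i)"
  shows "[c 0..<c N] = concat (map (\<lambda>i. [c i..<c (Suc i)]) [0..<N])"
  using assms
proof (induction N)
  case 0 then show ?case by simp
next
  case (Suc N)
  have h0: "c 0 \<le> c N" by (rule mono_chain) (use Suc.prems in simp)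
  have h: "[c 0..<c N] = concat (map (\<lambda>i. [c i..<c (Suc i)]) [0..<N])"
    using Suc by auto
  have le: "c N \<le> c (Suc N)" using Suc.prems by simp
  have "[c 0..<c (Suc N)] = [c 0..<c N + (c (Suc N) - c N)]" using le by simp
  also have "\<dots> = [c 0..<c N] @ [c N..<c N + (c (Suc N) - c N)]" by (rule upt_add_eq_append[OF h0])
  also have "\<dots> = [c 0..<c N] @ [c N..<c (Suc N)]" using le by simp
  finally show ?case using h by simp
qed

lemma run_pass_alt: "run_pass A j xs q = fold (\<lambda>p q. s_step A j p q (xs ! p)) [0..<length xs] q"
proof -
  have "zip [0..<length xs] xs = map (\<lambda>i. (i, xs ! i)) [0..<length xs]"
    by (rule nth_equalityI) auto
  then show ?thesis unfolding run_pass_def by (simp add: fold_map comp_def)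
qed

definition enc :: "nat \<Rightarrow> nat \<Rightarrow> bool list" where "enc s q = map (bit q) [0..<s]"
definition dec :: "bool list \<Rightarrow> nat" where "dec bs = horner_sum of_bool 2 bs"

lemma dec_enc: "q < 2 ^ s \<Longrightarrow> dec (enc s q) = q"
  unfolding dec_def enc_def horner_sum_bit_eq_take_bit by (simp add: take_bit_eq_mod)

lemma fold_bound:
  assumes "valid_salg s A" "q < 2 ^ s"
  shows "fold (\<lambda>p q. s_step A j p q (v p)) ps q < 2 ^ s"
  using assms(2)
proof (induction ps arbitrary: q)
  case Nil then show ?case by simp
next
  case (Cons p ps)
  have "s_step A j p q (v p) < 2 ^ s" using assms(1) Cons.prems by (simp add: valid_salg_def)
  then show ?case using Cons.IH by simp
qed

context isys begin

definition cb :: "nat \<Rightarrow> nat" where "cb i = (if i = 0 then 0 else if i < k then mn i else t)"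

definition vl :: "nat \<Rightarrow> nat set \<Rightarrow> (nat \<Rightarrow> nat \<Rightarrow> nat) \<Rightarrow> nat list \<Rightarrow> nat \<Rightarrow> nat" where
  "vl i Xi \<pi> R p = (if p \<in> F ! i then sorted_list_of_set Xi ! (\<pi> i (p - mn i)) else R ! p)"

definition segrun :: "salg \<Rightarrow> (nat \<Rightarrow> nat \<Rightarrow> nat) \<Rightarrow> nat list \<Rightarrow> nat \<Rightarrow> nat \<Rightarrow> nat set \<Rightarrow> nat \<Rightarrow> nat" where
  "segrun A \<pi> R j i Xi q = fold (\<lambda>p q. s_step A j p q (vl i Xi \<pi> R p)) [cb i..<cb (Suc i)] q"

definition mkP :: "nat \<Rightarrow> nat \<Rightarrow> salg \<Rightarrow> (nat \<Rightarrow> nat \<Rightarrow> nat) \<Rightarrow> nat list \<Rightarrow> protocol" where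
  "mkP l s A \<pi> R = Protocol
     (\<lambda>\<tau>. if length \<tau> < l * k * s then Some ((length \<tau> div s) mod k) else None)
     (\<lambda>i Xi \<tau>. bit (segrun A \<pi> R (length \<tau> div s div k) i Xi
                 (if length \<tau> div s = 0 then s_init A else dec (take s (drop ((length \<tau> div s - 1) * s) \<tau>))))
                 (length \<tau> mod s))
     (\<lambda>\<tau>. \<not> (if k = 0 then run_salg A l R
              else s_out A (if l = 0 then s_init A else dec (drop (length \<tau> - s) \<tau>))))"

primrec Qa :: "salg \<Rightarrow> (nat \<Rightarrow> nat \<Rightarrow> nat) \<Rightarrow> nat list \<Rightarrow> nat set list \<Rightarrow> nat \<Rightarrow> nat" where
  "Qa A \<pi> R X 0 = s_init A"
| "Qa A \<pi> R X (Suc b) = segrun A \<pi> R (b div k) (b mod k) (X ! (b mod k)) (Qa A \<pi> R X b)"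

definition TT :: "nat \<Rightarrow> nat \<Rightarrow> salg \<Rightarrow> (nat \<Rightarrow> nat \<Rightarrow> nat) \<Rightarrow> nat list \<Rightarrow> nat set list \<Rightarrow> bool list" where
  "TT l s A \<pi> R X = map (\<lambda>m. bit (Qa A \<pi> R X (Suc (m div s))) (m mod s)) [0..<l * k * s]"

lemma spk: "p_speaker (mkP l s A \<pi> R) \<tau> = (if length \<tau> < l * k * s then Some ((length \<tau> div s) mod k) else None)"
  by (simp add: mkP_def)

lemma len_transcript: "length (transcript (mkP l s A \<pi> R) X m) = min m (l * k * s)"
proof (induction m)
  case 0 then show ?case by simp
next
  case (Suc m)
  show ?case
  proof (cases "m < l * k * s")
    case True
    then have "length (transcript (mkP l s A \<pi> R) X m) < l * k * s" using Suc by simp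
    then show ?thesis using Suc True by (simp add: spk Let_def)
  next
    case False
    then have "\<not> length (transcript (mkP l s A \<pi> R) X m) < l * k * s" using Suc by simp
    then show ?thesis using Suc False by (simp add: spk Let_def)
  qed
qed

lemma Qa_bound: "valid_salg s A \<Longrightarrow> Qa A \<pi> R X b < 2 ^ s"
proof (induction b)
  case 0 then show ?case by (simp add: valid_salg_def)
next
  case (Suc b)
  then show ?case unfolding Qa.simps segrun_def by (intro fold_bound) auto
qed

lemma TT_len: "length (TT l s A \<pi> R X) = l * k * s" by (simp add: TT_def)

lemma TT_block:
  assumes b: "b < l * k"
  shows "take s (drop (b * s) (TT l s A \<pi> R X)) = enc s (Qa A \<pi> R X (Suc b))"
proof (rule nth_equalityI)
  have bs: "b * s + s \<le> l * k * s" using b by (metis add.commute mult_Suc mult_le_mono1 Suc_leI)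
  show "length (take s (drop (b * s) (TT l s A \<pi> R X))) = length (enc s (Qa A \<pi> R X (Suc b)))"
    using bs by (simp add: TT_len enc_def)
  fix j assume "j < length (take s (drop (b * s) (TT l s A \<pi> R X)))"
  then have j: "j < s" using bs by (simp add: TT_len)
  have lt: "b * s + j < l * k * s" using bs j by simp
  have dm: "(b * s + j) div s = b" "(b * s + j) mod s = j" using j by auto
  have "take s (drop (b * s) (TT l s A \<pi> R X)) ! j = TT l s A \<pi> R X ! (b * s + j)"
    using j lt b by (subst nth_take, simp, subst nth_drop) (simp_all add: TT_len)
  also have "\<dots> = bit (Qa A \<pi> R X (Suc ((b * s + j) div s))) ((b * s + j) mod s)"
    unfolding TT_def using lt by (simp del: Qa.simps)
  also have "\<dots> = enc s (Qa A \<pi> R X (Suc b)) ! j" using dm j by (simp add: enc_def del: Qa.simps)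
  finally show "take s (drop (b * s) (TT l s A \<pi> R X)) ! j = enc s (Qa A \<pi> R X (Suc b)) ! j" .
qed

end


context isys begin

lemma take_drop_take: "d + s \<le> m \<Longrightarrow> take s (drop d (take m xs)) = take s (drop d xs)"
  by (simp add: drop_take min_def)

lemma msg_mkP: "p_msg (mkP l s A \<pi> R) i Xi \<tau> = bit (segrun A \<pi> R (length \<tau> div s div k) i Xi
                 (if length \<tau> div s = 0 then s_init A else dec (take s (drop ((length \<tau> div s - 1) * s) \<tau>))))
                 (length \<tau> mod s)"
  unfolding mkP_def by (simp only: protocol.sel)

lemma transcript_TT:
  assumes v: "valid_salg s A"
  shows "m \<le> l * k * s \<Longrightarrow> transcript (mkP l s A \<pi> R) X m = take m (TT l s A \<pi> R X)"
proof (induction m)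
  case 0 then show ?case by simp
next
  case (Suc m)
  let ?P = "mkP l s A \<pi> R" and ?T = "TT l s A \<pi> R X"
  have m: "m < l * k * s" using Suc.prems by simp
  have IH: "transcript ?P X m = take m ?T" using Suc by simp
  have s0: "s > 0" using m by (cases s) auto
  define b where "b = m div s"
  have bl: "b < l * k" using m s0 unfolding b_def by (simp add: div_less_iff_less_mult)
  have lenT: "length (take m ?T) = m" using m by (simp add: TT_len)
  have q: "(if b = 0 then s_init A else dec (take s (drop ((b - 1) * s) (take m ?T)))) = Qa A \<pi> R X b"
  proof (cases "b = 0")
    case True then show ?thesis by simp
  next
    case False
    have "(b - 1) * s + s \<le> m" using False s0 unfolding b_def
      by (metis Suc_diff_1 bot_nat_0.not_eq_extremum div_times_less_eq_dividend mult_Suc add.commute)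
    then have "take s (drop ((b - 1) * s) (take m ?T)) = take s (drop ((b - 1) * s) ?T)"
      by (rule take_drop_take)
    also have "\<dots> = enc s (Qa A \<pi> R X (Suc (b - 1)))" using bl by (intro TT_block) simp
    finally show ?thesis using False dec_enc[OF Qa_bound[OF v]] by simp
  qed
  have msg: "p_msg ?P ((m div s) mod k) (X ! ((m div s) mod k)) (take m ?T) = ?T ! m"
  proof -
    have "p_msg ?P ((m div s) mod k) (X ! ((m div s) mod k)) (take m ?T)
        = bit (segrun A \<pi> R (b div k) (b mod k) (X ! (b mod k)) (Qa A \<pi> R X b)) (m mod s)"
      unfolding msg_mkP lenT b_def[symmetric] q ..
    also have "\<dots> = bit (Qa A \<pi> R X (Suc b)) (m mod s)" by simp
    also have "\<dots> = ?T ! m" using m unfolding TT_def b_def by (simp del: Qa.simps)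
    finally show ?thesis .
  qed
  have "transcript ?P X (Suc m) = take m ?T @ [?T ! m]"
    using IH lenT m msg by (simp add: spk Let_def)
  also have "\<dots> = take (Suc m) ?T" using m by (simp add: TT_len take_Suc_conv_app_nth)
  finally show ?case .
qed

lemma least_halt:
  "(LEAST m. p_speaker (mkP l s A \<pi> R) (transcript (mkP l s A \<pi> R) X m) = None) = l * k * s"
proof (rule Least_equality)
  show "p_speaker (mkP l s A \<pi> R) (transcript (mkP l s A \<pi> R) X (l * k * s)) = None"
    by (simp add: spk len_transcript)
  fix y assume "p_speaker (mkP l s A \<pi> R) (transcript (mkP l s A \<pi> R) X y) = None"
  then have "\<not> min y (l * k * s) < l * k * s" by (simp add: spk len_transcript split: if_splits)
  then show "l * k * s \<le> y" by simp
qed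

lemma halts_mkP: "halts (mkP l s A \<pi> R) X"
  unfolding halts_def by (rule exI[of _ "l * k * s"]) (simp add: spk len_transcript)

lemma final_mkP: "final_transcript (mkP l s A \<pi> R) X = transcript (mkP l s A \<pi> R) X (l * k * s)"
  unfolding final_transcript_def least_halt ..

lemma bits_mkP: "bits_by (mkP l s A \<pi> R) i (transcript (mkP l s A \<pi> R) X m) \<le> l * s"
proof -
  let ?\<tau> = "transcript (mkP l s A \<pi> R) X m"
  have sub: "{j. j < length ?\<tau> \<and> p_speaker (mkP l s A \<pi> R) (take j ?\<tau>) = Some i}
      \<subseteq> {j. j < l * k * s \<and> (j div s) mod k = i}"
    using len_transcript[of l s A \<pi> R X m] by (auto simp: spk split: if_splits)
  have inj: "inj_on (\<lambda>j. (j div s div k, j mod s)) {j. j < l * k * s \<and> (j div s) mod k = i}"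
  proof (rule inj_onI)
    fix a b assume a: "a \<in> {j. j < l * k * s \<and> (j div s) mod k = i}" "b \<in> {j. j < l * k * s \<and> (j div s) mod k = i}"
      "(a div s div k, a mod s) = (b div s div k, b mod s)"
    have e1: "a div s div k = b div s div k" "a mod s = b mod s" using a(3) by simp_all
    have e2: "a div s mod k = b div s mod k" using a(1,2) by simp
    have "a div s = b div s" using e1(1) e2 div_mult_mod_eq[of "a div s" k] div_mult_mod_eq[of "b div s" k] by metis
    then show "a = b" using e1(2) div_mult_mod_eq[of a s] div_mult_mod_eq[of b s] by metis
  qed
  have into: "(\<lambda>j. (j div s div k, j mod s)) ` {j. j < l * k * s \<and> (j div s) mod k = i} \<subseteq> {..<l} \<times> {..<s}"
  proof
    fix z assume "z \<in> (\<lambda>j. (j div s div k, j mod s)) ` {j. j < l * k * s \<and> (j div s) mod k = i}"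
    then obtain j where j: "j < l * k * s" "z = (j div s div k, j mod s)" by blast
    have "l * k * s \<noteq> 0" using j(1) by linarith
    then have s0: "s > 0" and k0: "k > 0" by auto
    have "j div s < l * k" using j(1) s0 by (simp add: div_less_iff_less_mult)
    then have "j div s div k < l" using k0 by (simp add: div_less_iff_less_mult)
    moreover have "j mod s < s" using s0 by simp
    ultimately show "z \<in> {..<l} \<times> {..<s}" using j(2) by simp
  qed
  have "card {j. j < l * k * s \<and> (j div s) mod k = i} \<le> card ({..<l} \<times> {..<s})"
    using card_inj_on_le[OF inj into] by simp
  then have "card {j. j < l * k * s \<and> (j div s) mod k = i} \<le> l * s" by (simp add: card_cartesian_product)
  moreover have "card {j. j < length ?\<tau> \<and> p_speaker (mkP l s A \<pi> R) (take j ?\<tau>) = Some i}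
      \<le> card {j. j < l * k * s \<and> (j div s) mod k = i}"
    by (rule card_mono[OF _ sub]) simp
  ultimately show ?thesis unfolding bits_by_def by linarith
qed

lemma writes_mkP: "writes_at_most k (l * s) (mkP l s A \<pi> R)"
proof -
  have 1: "i < k" if "p_speaker (mkP l s A \<pi> R) \<tau> = Some i" for \<tau> i
  proof -
    have "length \<tau> < l * k * s" "i = (length \<tau> div s) mod k" using that by (auto simp: spk split: if_splits)
    then show "i < k" by (cases k) auto
  qed
  show ?thesis unfolding writes_at_most_def using 1 halts_mkP bits_mkP by blast
qed

end


context isys begin

lemma cb_0: "cb 0 = 0" by (simp add: cb_def)
lemma cb_k: "0 < k \<Longrightarrow> cb k = t" by (simp add: cb_def)

lemma mn_lt_t: "i < k \<Longrightarrow> mn i < t" using Fi(2)[of i] Fi(3)[of i] by linarith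

lemma cb_mono: "i < k \<Longrightarrow> cb i \<le> cb (Suc i)"
proof -
  assume i: "i < k"
  show ?thesis
  proof (cases "i = 0")
    case True then show ?thesis by (simp add: cb_def)
  next
    case False
    show ?thesis
    proof (cases "Suc i < k")
      case True then show ?thesis using False mn_mono[of i "Suc i"] by (simp add: cb_def)
    next
      case c2: False then show ?thesis using False i mn_lt_t[OF i] by (simp add: cb_def)
    qed
  qed
qed

lemma seg:
  assumes i: "i < k" and p1: "cb i \<le> p" and p2: "p < cb (Suc i)"
  shows "Phi X \<pi> R ! p = vl i (X ! i) \<pi> R p"
proof -
  have pt: "p < t"
  proof (cases "Suc i < k")
    case True then show ?thesis using p2 mn_lt_t[OF True] by (simp add: cb_def)
  next
    case False then show ?thesis using p2 by (simp add: cb_def)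
  qed
  have iff: "inI p \<longleftrightarrow> p \<in> F ! i"
  proof
    assume "inI p"
    then obtain j where j: "j < k" "p \<in> F ! j" unfolding inI_def by blast
    have "j = i"
    proof (rule ccontr)
      assume "j \<noteq> i"
      then consider "j < i" | "i < j" by linarith
      then show False
      proof cases
        case 1
        then have "i \<noteq> 0" by simp
        then have "cb i = mn i" using i by (simp add: cb_def)
        moreover have "p \<le> mx j" using j mem_F by blast
        ultimately show False using sep[OF 1 i] p1 by linarith
      next
        case 2
        then have s: "Suc i < k" using j(1) by simp
        then have "cb (Suc i) = mn (Suc i)" by (simp add: cb_def)
        moreover have "mn (Suc i) \<le> mn j" using 2 j(1) mn_mono[of "Suc i" j]
          by (cases "Suc i = j") auto
        moreover have "mn j \<le> p" using j mem_F by blast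
        ultimately show False using p2 by linarith
      qed
    qed
    then show "p \<in> F ! i" using j by simp
  next
    assume "p \<in> F ! i"
    then show "inI p" using i unfolding inI_def by blast
  qed
  show ?thesis
  proof (cases "p \<in> F ! i")
    case True
    then show ?thesis using Phi_in[OF i True] by (simp add: vl_def)
  next
    case False
    then show ?thesis using Phi_out[OF pt] iff by (simp add: vl_def)
  qed
qed

lemma run_pass_Phi:
  assumes k0: "0 < k"
  shows "run_pass A j (Phi X \<pi> R) q = fold (\<lambda>i q. segrun A \<pi> R j i (X ! i) q) [0..<k] q"
proof -
  have "run_pass A j (Phi X \<pi> R) q = fold (\<lambda>p q. s_step A j p q (Phi X \<pi> R ! p)) [0..<t] q"
    by (simp add: run_pass_alt Phi_len)
  also have "[0..<t] = concat (map (\<lambda>i. [cb i..<cb (Suc i)]) [0..<k])"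
    using upt_concat[of k cb] cb_mono cb_0 cb_k[OF k0] by simp
  also have "fold (\<lambda>p q. s_step A j p q (Phi X \<pi> R ! p)) (concat (map (\<lambda>i. [cb i..<cb (Suc i)]) [0..<k])) q
      = fold (\<lambda>i. fold (\<lambda>p q. s_step A j p q (Phi X \<pi> R ! p)) [cb i..<cb (Suc i)]) [0..<k] q"
    by (simp add: fold_concat' fold_map comp_def)
  also have "\<dots> = fold (\<lambda>i q. segrun A \<pi> R j i (X ! i) q) [0..<k] q"
  proof (rule fold_cong[OF refl refl])
    fix i assume "i \<in> set [0..<k]"
    then have i: "i < k" by simp
    show "fold (\<lambda>p q. s_step A j p q (Phi X \<pi> R ! p)) [cb i..<cb (Suc i)] = (\<lambda>q. segrun A \<pi> R j i (X ! i) q)"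
      unfolding segrun_def
    proof
      fix q show "fold (\<lambda>p q. s_step A j p q (Phi X \<pi> R ! p)) [cb i..<cb (Suc i)] q =
          fold (\<lambda>p q. s_step A j p q (vl i (X ! i) \<pi> R p)) [cb i..<cb (Suc i)] q"
        by (rule fold_cong[OF refl refl]) (use seg[OF i] in auto)
    qed
  qed
  finally show ?thesis .
qed

lemma Qa_step:
  assumes k0: "0 < k"
  shows "i \<le> k \<Longrightarrow> Qa A \<pi> R X (j * k + i) = fold (\<lambda>i q. segrun A \<pi> R j i (X ! i) q) [0..<i] (Qa A \<pi> R X (j * k))"
proof (induction i)
  case 0 then show ?case by simp
next
  case (Suc i)
  then have i: "i < k" by simp
  have dm: "(j * k + i) div k = j" "(j * k + i) mod k = i" using i by auto
  have "Qa A \<pi> R X (j * k + Suc i) = segrun A \<pi> R j i (X ! i) (Qa A \<pi> R X (j * k + i))"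
    using dm by simp
  then show ?case using Suc i by simp
qed

lemma run_eq:
  assumes k0: "0 < k"
  shows "run_salg A l (Phi X \<pi> R) = s_out A (Qa A \<pi> R X (l * k))"
proof -
  have "fold (\<lambda>j q. run_pass A j (Phi X \<pi> R) q) [0..<l'] (s_init A) = Qa A \<pi> R X (l' * k)" for l'
  proof (induction l')
    case 0 then show ?case by simp
  next
    case (Suc l')
    have "Qa A \<pi> R X (Suc l' * k) = Qa A \<pi> R X (l' * k + k)" by (simp add: add.commute)
    also have "\<dots> = fold (\<lambda>i q. segrun A \<pi> R l' i (X ! i) q) [0..<k] (Qa A \<pi> R X (l' * k))"
      using Qa_step[OF k0, where i=k and j=l'] by simp
    also have "\<dots> = run_pass A l' (Phi X \<pi> R) (Qa A \<pi> R X (l' * k))"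
      using run_pass_Phi[OF k0] by simp
    finally show ?case using Suc by simp
  qed
  then show ?thesis unfolding run_salg_def by simp
qed

lemma decide_mkP: "p_decide (mkP l s A \<pi> R) \<tau> = (\<not> (if k = 0 then run_salg A l R
              else s_out A (if l = 0 then s_init A else dec (drop (length \<tau> - s) \<tau>))))"
  unfolding mkP_def by (simp only: protocol.sel)

lemma output_mkP:
  assumes v: "valid_salg s A" and R: "R \<in> streams n t"
  shows "protocol_output (mkP l s A \<pi> R) X = (\<not> run_salg A l (Phi X \<pi> R))"
proof (cases "k = 0")
  case True
  have lR: "length R = t" using R by (simp add: streams_def)
  have nI: "\<not> inI p" for p unfolding inI_def using True by simp
  have "Phi X \<pi> R = R"
  proof (rule nth_equalityI)
    show "length (Phi X \<pi> R) = length R" using lR by (simp add: Phi_len)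
    fix p assume "p < length (Phi X \<pi> R)"
    then have "p < t" by (simp add: Phi_len)
    then show "Phi X \<pi> R ! p = R ! p" using Phi_out nI by blast
  qed
  then show ?thesis unfolding protocol_output_def decide_mkP using True by simp
next
  case False
  then have k0: "0 < k" by simp
  let ?T = "TT l s A \<pi> R X"
  have ft: "final_transcript (mkP l s A \<pi> R) X = ?T"
    unfolding final_mkP using transcript_TT[OF v, of "l * k * s" l \<pi> R X] by (simp add: TT_len)
  have dec_ok: "(if l = 0 then s_init A else dec (drop (length ?T - s) ?T)) = Qa A \<pi> R X (l * k)"
  proof (cases "l = 0")
    case True then show ?thesis by simp
  next
    case l0: False
    have b: "l * k - 1 < l * k" using l0 k0 by simp
    have e: "(l * k - 1) * s = l * k * s - s" by (simp add: diff_mult_distrib)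
    have "drop (length ?T - s) ?T = take s (drop ((l * k - 1) * s) ?T)"
      using e by (simp add: TT_len)
    also have "\<dots> = enc s (Qa A \<pi> R X (Suc (l * k - 1)))" by (rule TT_block[OF b])
    also have "Suc (l * k - 1) = l * k" using l0 k0 by simp
    finally show ?thesis using l0 dec_enc[OF Qa_bound[OF v]] by simp
  qed
  have "protocol_output (mkP l s A \<pi> R) X = (\<not> s_out A (Qa A \<pi> R X (l * k)))"
    unfolding protocol_output_def ft decide_mkP using k0 dec_ok by simp
  then show ?thesis using run_eq[OF k0] by simp
qed

end



lemma bern_half:
  "measure_pmf.prob (bernoulli_pmf (1/2) \<bind> g) {True}
   = measure_pmf.prob (g True) {True} / 2 + measure_pmf.prob (g False) {True} / 2"
proof -
  have "measure_pmf.prob (bernoulli_pmf (1/2) \<bind> g) {True} = pmf (bernoulli_pmf (1/2) \<bind> g) True"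
    by (simp add: measure_pmf_single)
  also have "\<dots> = (\<integral>b. pmf (g b) True \<partial>bernoulli_pmf (1/2))" by (rule pmf_bind)
  also have "\<dots> = pmf (g True) True / 2 + pmf (g False) True / 2" by simp
  finally show ?thesis by (simp add: measure_pmf_single)
qed

lemma compl_bind:
  "measure_pmf.prob (bind_pmf M (\<lambda>A. bind_pmf \<mu> (\<lambda>y. return_pmf (f A y)))) {True}
   = 1 - measure_pmf.prob (bind_pmf M (\<lambda>A. bind_pmf \<mu> (\<lambda>y. return_pmf (\<not> f A y)))) {True}"
proof -
  have i1: "integrable M (\<lambda>A. measure_pmf.prob \<mu> {y. f A y})"
    by (rule measure_pmf.integrable_const_bound[where B=1]) auto
  have c: "measure_pmf.prob \<mu> {y. \<not> f A y} = 1 - measure_pmf.prob \<mu> {y. f A y}" for A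
  proof -
    have "{y. \<not> f A y} = space (measure_pmf \<mu>) - {y. f A y}" by auto
    moreover have "measure_pmf.prob \<mu> (space (measure_pmf \<mu>) - {y. f A y}) = 1 - measure_pmf.prob \<mu> {y. f A y}"
      by (rule measure_pmf.prob_compl) simp
    ultimately show ?thesis by simp
  qed
  show ?thesis unfolding prob_bind_return_True c using i1 by simp
qed

lemma bind_commute3:
  "bind_pmf p (\<lambda>X. bind_pmf q (\<lambda>A. return_pmf (f A X))) = bind_pmf q (\<lambda>A. bind_pmf p (\<lambda>X. return_pmf (f A X)))"
  by (rule bind_commute_pmf)

context isys begin

definition Rd where "Rd = pmf_of_set (Perms \<times> streams n t)"
definition PrD where "PrD l s Alg = map_pmf (\<lambda>(A, r). mkP l s A (fst r) (snd r)) (pair_pmf Alg Rd)"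

lemma Perms_ne: "Perms \<noteq> {}"
proof -
  have "(\<lambda>i\<in>{..<k}. id) \<in> Perms" unfolding Perms_def by (auto simp: permutes_id)
  then show ?thesis by blast
qed

lemma set_Rd: "set_pmf Rd = Perms \<times> streams n t"
proof -
  have "Perms \<times> streams n t \<noteq> {}" using Perms_ne streams_ne[OF npos] by blast
  moreover have "finite (Perms \<times> streams n t)" using finite_Perms finite_streams by simp
  ultimately show ?thesis unfolding Rd_def by (rule set_pmf_of_set)
qed

lemma err_eq:
  assumes val: "\<And>A. A \<in> set_pmf Alg \<Longrightarrow> valid_salg s A" and ne: "Good b \<noteq> {}"
  shows "bind_pmf (pmf_of_set (USD_inputs n (Sizes F) b)) (\<lambda>X. bind_pmf (PrD l s Alg) (\<lambda>P. return_pmf (protocol_output P X \<noteq> b)))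
       = bind_pmf Alg (\<lambda>A. bind_pmf (pmf_of_set (Good b)) (\<lambda>y. return_pmf (run_salg A l y = b)))"
proof -
  obtain y0 where y0: "y0 \<in> Good b" using ne by blast
  have USDne: "USD_inputs n (Sizes F) b \<noteq> {}" using Good_facts2(1)[OF y0] by blast
  have finU: "finite (USD_inputs n (Sizes F) b)" by (rule finite_USD)
  have PSne: "Perms \<times> streams n t \<noteq> {}" using Perms_ne streams_ne[OF npos] by blast
  have finPS: "finite (Perms \<times> streams n t)" using finite_Perms finite_streams by simp
  have s1: "bind_pmf (PrD l s Alg) g = bind_pmf Alg (\<lambda>A. bind_pmf Rd (\<lambda>r. g (mkP l s A (fst r) (snd r))))" for g
    unfolding PrD_def by (simp add: bind_map_pmf pair_pmf_def bind_assoc_pmf bind_return_pmf)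
  have s2: "bind_pmf (PrD l s Alg) (\<lambda>P. return_pmf (protocol_output P X \<noteq> b))
      = bind_pmf Alg (\<lambda>A. bind_pmf Rd (\<lambda>r. return_pmf (run_salg A l (Phi X (fst r) (snd r)) = b)))" for X
    unfolding s1
  proof (rule bind_pmf_cong[OF refl])
    fix A assume A: "A \<in> set_pmf Alg"
    show "bind_pmf Rd (\<lambda>r. return_pmf (protocol_output (mkP l s A (fst r) (snd r)) X \<noteq> b)) =
          bind_pmf Rd (\<lambda>r. return_pmf (run_salg A l (Phi X (fst r) (snd r)) = b))"
    proof (rule bind_pmf_cong[OF refl])
      fix r assume r: "r \<in> set_pmf Rd"
      have "r \<in> Perms \<times> streams n t" using r unfolding set_Rd .
      then have "snd r \<in> streams n t" by (simp add: mem_Times_iff)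
      then have "protocol_output (mkP l s A (fst r) (snd r)) X = (\<not> run_salg A l (Phi X (fst r) (snd r)))"
        by (rule output_mkP[OF val[OF A]])
      then show "return_pmf (protocol_output (mkP l s A (fst r) (snd r)) X \<noteq> b) =
          return_pmf (run_salg A l (Phi X (fst r) (snd r)) = b)" by simp
    qed
  qed
  have s3: "bind_pmf (pmf_of_set (USD_inputs n (Sizes F) b)) (\<lambda>X. bind_pmf Rd (\<lambda>r. return_pmf (run_salg A l (Phi X (fst r) (snd r)) = b)))
      = bind_pmf (pmf_of_set (Good b)) (\<lambda>y. return_pmf (run_salg A l y = b))" for A
  proof -
    have "bind_pmf (pmf_of_set (USD_inputs n (Sizes F) b)) (\<lambda>X. bind_pmf Rd (\<lambda>r. return_pmf (run_salg A l (Phi X (fst r) (snd r)) = b)))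
        = map_pmf (\<lambda>d. run_salg A l (Phi3 d) = b) (pair_pmf (pmf_of_set (USD_inputs n (Sizes F) b)) Rd)"
      by (simp add: pair_pmf_def map_bind_pmf map_return_pmf Phi3_def)
    also have "pair_pmf (pmf_of_set (USD_inputs n (Sizes F) b)) Rd = pmf_of_set (Dom b)"
      unfolding Rd_def Dom_def by (rule pair_pmf_of_set[OF finU USDne finPS PSne])
    also have "map_pmf (\<lambda>d. run_salg A l (Phi3 d) = b) (pmf_of_set (Dom b))
        = map_pmf (\<lambda>y. run_salg A l y = b) (map_pmf Phi3 (pmf_of_set (Dom b)))"
      by (simp add: pmf.map_comp comp_def)
    also have "\<dots> = map_pmf (\<lambda>y. run_salg A l y = b) (pmf_of_set (Good b))"
      by (simp add: map_Phi_Good[OF ne])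
    also have "\<dots> = bind_pmf (pmf_of_set (Good b)) (\<lambda>y. return_pmf (run_salg A l y = b))"
      by (simp add: map_pmf_def)
    finally show ?thesis .
  qed
  have "bind_pmf (pmf_of_set (USD_inputs n (Sizes F) b)) (\<lambda>X. bind_pmf (PrD l s Alg) (\<lambda>P. return_pmf (protocol_output P X \<noteq> b)))
      = bind_pmf (pmf_of_set (USD_inputs n (Sizes F) b)) (\<lambda>X. bind_pmf Alg (\<lambda>A. bind_pmf Rd (\<lambda>r. return_pmf (run_salg A l (Phi X (fst r) (snd r)) = b))))"
    unfolding s2 ..
  also have "\<dots> = bind_pmf Alg (\<lambda>A. bind_pmf (pmf_of_set (USD_inputs n (Sizes F) b)) (\<lambda>X. bind_pmf Rd (\<lambda>r. return_pmf (run_salg A l (Phi X (fst r) (snd r)) = b))))"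
    by (rule bind_commute_pmf)
  also have "\<dots> = bind_pmf Alg (\<lambda>A. bind_pmf (pmf_of_set (Good b)) (\<lambda>y. return_pmf (run_salg A l y = b)))"
    unfolding s3 ..
  finally show ?thesis .
qed

end



lemma ratio_bound:
  fixes c N n t :: nat and K :: real
  assumes n: "0 < n" and N: "0 < N" and K: "0 \<le> K"
    and h1: "real n * real c \<le> K * real t ^ 2 * real N" and h2: "1000 * real t ^ 2 \<le> real n"
  shows "real c / real N \<le> K / 1000"
proof -
  have "1000 * (real n * real c) \<le> 1000 * (K * real t ^ 2 * real N)" using h1 by simp
  also have "\<dots> = K * real N * (1000 * real t ^ 2)" by (simp add: algebra_simps)
  also have "\<dots> \<le> K * real N * real n" using h2 K by (intro mult_left_mono) auto
  finally have "real n * (1000 * real c) \<le> real n * (K * real N)" by (simp add: algebra_simps)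
  then have "1000 * real c \<le> K * real N" using n by simp
  then show ?thesis using N by (simp add: pos_divide_le_eq field_simps)
qed

theorem mainTheorem16:
  "\<exists>C::real. C > 0 \<and>
     (\<forall>n t k (F :: nat set list) l s (Alg :: salg pmf).
        0 < n \<longrightarrow> C * real t ^ 2 \<le> real n \<longrightarrow>
        is_interval_system t k F \<longrightarrow>
        distinguishes l s Alg (planted n t F) (uniform_stream n t) (5 / 1000) \<longrightarrow>
        (\<exists>Pr :: protocol pmf.
           (\<forall>P\<in>set_pmf Pr. writes_at_most k (l * s) P) \<and>
           usd_error n (Sizes F) Pr \<le> 1 / 100))"
proof (intro exI[of _ 1000] conjI allI impI)
  show "(1000::real) > 0" by simp
  fix n t k :: nat and F :: "nat set list" and l s :: nat and Alg :: "salg pmf"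
  assume npos: "0 < n" and Ct: "1000 * real t ^ 2 \<le> real n" and isF: "is_interval_system t k F"
    and dist: "distinguishes l s Alg (planted n t F) (uniform_stream n t) (5 / 1000)"
  interpret I: isys n t k F using isF npos by unfold_locales
  have val: "\<And>A. A \<in> set_pmf Alg \<Longrightarrow> valid_salg s A" using dist unfolding distinguishes_def by blast
  define W where "W \<mu> f = measure_pmf.prob (bind_pmf Alg (\<lambda>A. bind_pmf \<mu> (\<lambda>y. return_pmf (f A y)))) {True}"
    for \<mu> :: "nat list pmf" and f :: "salg \<Rightarrow> nat list \<Rightarrow> bool"
  have comm: "measure_pmf.prob (bind_pmf D (\<lambda>X. bind_pmf Alg (\<lambda>A. return_pmf (f A X)))) {True} = W D f"
    for D f unfolding W_def by (subst bind_commute_pmf) (rule refl)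
  have D: "1 - 5 / 1000 \<le> W (uniform_stream n t) (\<lambda>A y. run_salg A l y) / 2
                          + W (planted n t F) (\<lambda>A y. \<not> run_salg A l y) / 2"
  proof -
    have "1 - 5 / 1000 \<le> measure_pmf.prob (bernoulli_pmf (1/2) \<bind> (\<lambda>b. (if b then uniform_stream n t else planted n t F)
             \<bind> (\<lambda>X. Alg \<bind> (\<lambda>A. return_pmf (run_salg A l X = b))))) {True}"
      using dist unfolding distinguishes_def by simp
    then show ?thesis unfolding bern_half by (simp add: comm)
  qed
  have cOm: "0 < card I.OmP" using I.finite_OmP I.OmP_ne by (simp add: card_gt_0_iff)
  have cSt: "0 < card (streams n t)" using finite_streams streams_ne[OF npos] by (auto simp: card_gt_0_iff)
  have tt0: "t * t + t \<le> 2 * (t * t)" by (cases t) auto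
  have tt: "real (t * t + t) \<le> 2 * real t ^ 2"
    using tt0 unfolding power2_eq_square by (metis of_nat_le_iff of_nat_mult of_nat_numeral)
  have epsT: "real (card (I.OmP - I.G2)) / real (card I.OmP) \<le> 2 / 1000"
  proof (rule ratio_bound[OF npos cOm _ _ Ct])
    have "real n * real (card (I.OmP - I.G2)) \<le> real (t * t + t) * real (card I.OmP)"
      using I.bad_planted by (metis of_nat_le_iff of_nat_mult)
    also have "\<dots> \<le> 2 * real t ^ 2 * real (card I.OmP)" using tt by (intro mult_right_mono) auto
    finally show "real n * real (card (I.OmP - I.G2)) \<le> 2 * real t ^ 2 * real (card I.OmP)" .
  qed simp
  have epsF: "real (card (streams n t - I.Good False)) / real (card (streams n t)) \<le> 1 / 1000"
  proof (rule ratio_bound[OF npos cSt _ _ Ct])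
    have "real n * real (card (streams n t - I.Good False)) \<le> real (t * t) * real (card (streams n t))"
      using I.bad_uniform by (metis of_nat_le_iff of_nat_mult)
    then show "real n * real (card (streams n t - I.Good False)) \<le> 1 * real t ^ 2 * real (card (streams n t))"
      by (simp add: power2_eq_square)
  qed simp
  have G2ne: "I.G2 \<noteq> {}"
  proof
    assume "I.G2 = {}"
    then have "I.OmP - I.G2 = I.OmP" by simp
    then show False using epsT cOm by simp
  qed
  have GTne: "I.Good True \<noteq> {}" using G2ne unfolding I.G2_def by blast
  have GFne: "I.Good False \<noteq> {}"
  proof
    assume "I.Good False = {}"
    then show False using epsF cSt by simp
  qed
  have cmpT: "\<bar>measure_pmf.prob (pmf_of_set (I.Good True)) E - measure_pmf.prob (planted n t F) E\<bar> \<le> 2 / 1000" for E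
  proof -
    have G2sub: "I.G2 \<subseteq> I.OmP" unfolding I.G2_def by blast
    have e1: "measure_pmf.prob (pmf_of_set (I.Good True)) E = measure_pmf.prob (pmf_of_set I.G2) (I.gP -` E)"
      unfolding I.map_gP_G2[OF G2ne, symmetric] by simp
    have e2: "measure_pmf.prob (planted n t F) E = measure_pmf.prob (pmf_of_set I.OmP) (I.gP -` E)"
      unfolding I.planted_eq by simp
    have h: "\<bar>measure_pmf.prob (pmf_of_set I.G2) (I.gP -` E) - measure_pmf.prob (pmf_of_set I.OmP) (I.gP -` E)\<bar>
        \<le> real (card (I.OmP - I.G2)) / real (card I.OmP)"
      using pmf_of_set_sub_diff[OF I.finite_OmP G2sub G2ne, of "I.gP -` E"] by (simp add: abs_minus_commute)
    show ?thesis unfolding e1 e2 using h epsT by linarith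
  qed
  have cmpF: "\<bar>measure_pmf.prob (pmf_of_set (I.Good False)) E - measure_pmf.prob (uniform_stream n t) E\<bar> \<le> 1 / 1000" for E
  proof -
    have sub: "I.Good False \<subseteq> streams n t" unfolding I.Good_def by blast
    have h: "\<bar>measure_pmf.prob (pmf_of_set (I.Good False)) E - measure_pmf.prob (pmf_of_set (streams n t)) E\<bar>
        \<le> real (card (streams n t - I.Good False)) / real (card (streams n t))"
      using pmf_of_set_sub_diff[OF finite_streams sub GFne, of E] by (simp add: abs_minus_commute)
    show ?thesis unfolding uniform_stream_def using h epsF by linarith
  qed
  have eT: "\<bar>W (pmf_of_set (I.Good True)) (\<lambda>A y. run_salg A l y) - W (planted n t F) (\<lambda>A y. run_salg A l y)\<bar> \<le> 2 / 1000"
    unfolding W_def by (rule bind_compare[OF cmpT])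
  have eF: "\<bar>W (pmf_of_set (I.Good False)) (\<lambda>A y. \<not> run_salg A l y) - W (uniform_stream n t) (\<lambda>A y. \<not> run_salg A l y)\<bar> \<le> 1 / 1000"
    unfolding W_def by (rule bind_compare[OF cmpF])
  have cP: "W (planted n t F) (\<lambda>A y. run_salg A l y) = 1 - W (planted n t F) (\<lambda>A y. \<not> run_salg A l y)"
    unfolding W_def by (rule compl_bind)
  have cU: "W (uniform_stream n t) (\<lambda>A y. \<not> run_salg A l y) = 1 - W (uniform_stream n t) (\<lambda>A y. run_salg A l y)"
    unfolding W_def using compl_bind[of Alg "uniform_stream n t" "\<lambda>A y. \<not> run_salg A l y"] by simp
  let ?Pr = "I.PrD l s Alg"
  have wr: "\<forall>P\<in>set_pmf ?Pr. writes_at_most k (l * s) P"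
    unfolding I.PrD_def using I.writes_mkP by auto
  have uT: "measure_pmf.prob (pmf_of_set (USD_inputs n (Sizes F) True) \<bind> (\<lambda>X. ?Pr \<bind> (\<lambda>P. return_pmf (protocol_output P X \<noteq> True)))) {True}
      = W (pmf_of_set (I.Good True)) (\<lambda>A y. run_salg A l y = True)"
    unfolding W_def by (subst I.err_eq[OF val GTne]) simp_all
  have uF: "measure_pmf.prob (pmf_of_set (USD_inputs n (Sizes F) False) \<bind> (\<lambda>X. ?Pr \<bind> (\<lambda>P. return_pmf (protocol_output P X \<noteq> False)))) {True}
      = W (pmf_of_set (I.Good False)) (\<lambda>A y. run_salg A l y = False)"
    unfolding W_def by (subst I.err_eq[OF val GFne]) simp_all
  have U: "usd_error n (Sizes F) ?Pr = W (pmf_of_set (I.Good True)) (\<lambda>A y. run_salg A l y) / 2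
       + W (pmf_of_set (I.Good False)) (\<lambda>A y. \<not> run_salg A l y) / 2"
    unfolding usd_error_def bern_half uT uF by simp
  have "usd_error n (Sizes F) ?Pr \<le> 1 / 100"
    using U D eT eF cP cU by linarith
  then show "\<exists>Pr :: protocol pmf. (\<forall>P\<in>set_pmf Pr. writes_at_most k (l * s) P) \<and> usd_error n (Sizes F) Pr \<le> 1 / 100"
    using wr by blast
qed



end
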